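(* Let $f=\sum_{i=0}^{d-1}c_it^i+t^d\in\mathcal{L}[t]$ be monic of degree $d\ge1$ with $c_0\ne0$, whose Newton polygon consists of exactly one edge, of slope $s$, and put $r=ds\in\mathbb{Z}$. Let $M$ be a left $\mathcal{L}[t]$-module isomorphic to $\mathcal{L}[t]/\mathcal{L}[t]f$. (1) There is an $\mathcal{O}$-lattice $\Lambda$ in $M$ with $\sigma^rt^d\Lambda=\Lambda$. If $s>0$, $\Lambda$ can moreover be chosen with $t^{-1}\Lambda\subseteq\Lambda$. (2) If $u,v\in\mathbb{Z}$, $u\ne0$, and $\Lambda'$ is an $\mathcal{O}$-lattice in $M$ with $\sigma^vt^u\Lambda'=\Lambda'$, then $v/u=s$.
   Context: $(\mathcal{L},v)$ is a complete discretely valued skew field (division ring with a discrete valuation $v:\mathcal{L}\to\mathbb{Z}\cup\{\infty\}$, complete), with valuation ring $\mathcal{O}=\{v\ge0\}$ and a fixed uniformizer $\sigma$ ($v(\sigma)=1$). $\mathcal{L}[t]$ is the polynomial ring in a central indeterminate $t$; $t$ acts invertibly on $M$ here since $c_0\neq 0$. The Newton polygon of $f=\sum a_it^i$ is the lower convex hull of the points $(i,v(a_i))$ with $a_i\ne0$. An $\mathcal{O}$-lattice in a finite-dimensional left $\mathcal{L}$-vector space $M$ is a finitely generated $\mathcal{O}$-submodule containing an $\mathcal{L}$-basis of $M$. *)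

theory Defs
  imports "HOL-Analysis.Analysis" "HOL-Library.Poly_Mapping"
begin

text \<open>The skew field L is the type 'a (class division_ring). The polynomial ring L[t]
  with central indeterminate t is the ring of finitely supported coefficient maps
  finitely supported maps (convolution product; t = single 1 1 is central).\<close>

definition discrete_valuation :: "('a::division_ring \<Rightarrow> int) \<Rightarrow> bool" where
  "discrete_valuation val \<longleftrightarrow>
     (\<forall>x y. x \<noteq> 0 \<longrightarrow> y \<noteq> 0 \<longrightarrow> val (x * y) = val x + val y) \<and>
     (\<forall>x y. x \<noteq> 0 \<longrightarrow> y \<noteq> 0 \<longrightarrow> x + y \<noteq> 0 \<longrightarrow> val (x + y) \<ge> min (val x) (val y))"

text \<open>Completeness w.r.t. the valuation topology (val 0 = infinity is encoded by the guards).\<close>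
definition val_complete :: "('a::division_ring \<Rightarrow> int) \<Rightarrow> bool" where
  "val_complete val \<longleftrightarrow>
     (\<forall>X::nat \<Rightarrow> 'a.
        (\<forall>N::int. \<exists>K. \<forall>m\<ge>K. \<forall>n\<ge>K. X m \<noteq> X n \<longrightarrow> val (X m - X n) \<ge> N) \<longrightarrow>
        (\<exists>l. \<forall>N::int. \<exists>K. \<forall>n\<ge>K. X n \<noteq> l \<longrightarrow> val (X n - l) \<ge> N))"

definition val_ring :: "('a::division_ring \<Rightarrow> int) \<Rightarrow> 'a set" where
  "val_ring val = {x. x = 0 \<or> 0 \<le> val x}"

definition monic_poly :: "(nat \<Rightarrow> 'a::division_ring) \<Rightarrow> nat \<Rightarrow> nat \<Rightarrow>\<^sub>0 'a" where
  "monic_poly c d = (\<Sum>i<d. Poly_Mapping.single i (c i)) + Poly_Mapping.single d 1"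

text \<open>Newton polygon: the lower convex hull of the points (i, val a_i), a_i \<noteq> 0, as a
  function on [min i, max i].\<close>
definition newton_polygon :: "('a::division_ring \<Rightarrow> int) \<Rightarrow> (nat \<Rightarrow>\<^sub>0 'a) \<Rightarrow> real \<Rightarrow> real" where
  "newton_polygon val f x = Inf {(\<Sum>i\<in>Poly_Mapping.keys f. l i * real_of_int (val (Poly_Mapping.lookup f i))) | l.
       (\<forall>i. 0 \<le> l i) \<and> (\<Sum>i\<in>Poly_Mapping.keys f. l i) = 1 \<and> (\<Sum>i\<in>Poly_Mapping.keys f. l i * real i) = x}"

definition newton_single_edge :: "('a::division_ring \<Rightarrow> int) \<Rightarrow> (nat \<Rightarrow>\<^sub>0 'a) \<Rightarrow> real \<Rightarrow> bool" where
  "newton_single_edge val f s \<longleftrightarrow> Poly_Mapping.keys f \<noteq> {} \<and> Min (Poly_Mapping.keys f) < Max (Poly_Mapping.keys f) \<and>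
     (\<exists>b. \<forall>x\<in>{real (Min (Poly_Mapping.keys f))..real (Max (Poly_Mapping.keys f))}. newton_polygon val f x = b + s * x)"

definition left_module :: "((nat \<Rightarrow>\<^sub>0 'a::division_ring) \<Rightarrow> 'm::ab_group_add \<Rightarrow> 'm) \<Rightarrow> bool" where
  "left_module act \<longleftrightarrow>
     (\<forall>g h x. act (g + h) x = act g x + act h x) \<and>
     (\<forall>g x y. act g (x + y) = act g x + act g y) \<and>
     (\<forall>g h x. act (g * h) x = act g (act h x)) \<and>
     (\<forall>x. act 1 x = x)"

text \<open>M is isomorphic to L[t]/L[t]f: there is m0 such that g \<mapsto> g m0 is onto with kernel L[t]f.\<close>
definition iso_cyclic_quotient :: "((nat \<Rightarrow>\<^sub>0 'a::division_ring) \<Rightarrow> 'm::ab_group_add \<Rightarrow> 'm) \<Rightarrow> (nat \<Rightarrow>\<^sub>0 'a) \<Rightarrow> bool" where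
  "iso_cyclic_quotient act f \<longleftrightarrow>
     (\<exists>m0. (\<forall>x. \<exists>g. x = act g m0) \<and> (\<forall>g. act g m0 = 0 \<longleftrightarrow> (\<exists>h. g = h * f)))"

definition scal :: "((nat \<Rightarrow>\<^sub>0 'a::division_ring) \<Rightarrow> 'm \<Rightarrow> 'm) \<Rightarrow> 'a \<Rightarrow> 'm \<Rightarrow> 'm" where
  "scal act a x = act (Poly_Mapping.single 0 a) x"

definition tact :: "((nat \<Rightarrow>\<^sub>0 'a::division_ring) \<Rightarrow> 'm \<Rightarrow> 'm) \<Rightarrow> 'm \<Rightarrow> 'm" where
  "tact act = act (Poly_Mapping.single 1 1)"

text \<open>t^u for u an integer (t acts invertibly on M).\<close>
definition tpow :: "((nat \<Rightarrow>\<^sub>0 'a::division_ring) \<Rightarrow> 'm \<Rightarrow> 'm) \<Rightarrow> int \<Rightarrow> 'm \<Rightarrow> 'm" where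
  "tpow act u = (if 0 \<le> u then tact act ^^ nat u else inv (tact act) ^^ nat (- u))"

definition O_span :: "('a::division_ring \<Rightarrow> int) \<Rightarrow> ((nat \<Rightarrow>\<^sub>0 'a) \<Rightarrow> 'm::ab_group_add \<Rightarrow> 'm) \<Rightarrow> 'm set \<Rightarrow> 'm set" where
  "O_span val act G = {(\<Sum>g\<in>G. scal act (a g) g) | a. \<forall>g\<in>G. a g \<in> val_ring val}"

definition L_basis :: "((nat \<Rightarrow>\<^sub>0 'a::division_ring) \<Rightarrow> 'm::ab_group_add \<Rightarrow> 'm) \<Rightarrow> 'm set \<Rightarrow> bool" where
  "L_basis act B \<longleftrightarrow>
     (\<forall>x. \<exists>S a. finite S \<and> S \<subseteq> B \<and> x = (\<Sum>b\<in>S. scal act (a b) b)) \<and>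
     (\<forall>S a. finite S \<longrightarrow> S \<subseteq> B \<longrightarrow> (\<Sum>b\<in>S. scal act (a b) b) = 0 \<longrightarrow> (\<forall>b\<in>S. a b = 0))"

definition O_lattice :: "('a::division_ring \<Rightarrow> int) \<Rightarrow> ((nat \<Rightarrow>\<^sub>0 'a) \<Rightarrow> 'm::ab_group_add \<Rightarrow> 'm) \<Rightarrow> 'm set \<Rightarrow> bool" where
  "O_lattice val act \<Lambda> \<longleftrightarrow> (\<exists>G. finite G \<and> \<Lambda> = O_span val act G) \<and> (\<exists>B\<subseteq>\<Lambda>. L_basis act B)"

end

theory Submission
  imports Defs
begin

context fixes val :: "'a::division_ring \<Rightarrow> int" assumes val: "discrete_valuation val"
begin

lemma val_mult: "x \<noteq> 0 \<Longrightarrow> y \<noteq> 0 \<Longrightarrow> val (x * y) = val x + val y"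
  using val unfolding discrete_valuation_def by blast

lemma val_add: "x \<noteq> 0 \<Longrightarrow> y \<noteq> 0 \<Longrightarrow> x + y \<noteq> 0 \<Longrightarrow> val (x + y) \<ge> min (val x) (val y)"
  using val unfolding discrete_valuation_def by blast

lemma val_one: "val 1 = 0"
  using val_mult[of 1 1] by simp

lemma val_minus_one: "val (-1) = 0"
  using val_mult[of "-1" "-1"] val_one by simp

lemma val_minus: "x \<noteq> 0 \<Longrightarrow> val (- x) = val x"
  using val_mult[of "-1" x] val_minus_one by simp

lemma val_inverse: "x \<noteq> 0 \<Longrightarrow> val (inverse x) = - val x"
  using val_mult[of x "inverse x"] val_one by simp

lemma vr_iff: "x \<in> val_ring val \<longleftrightarrow> x = 0 \<or> 0 \<le> val x"
  by (simp add: val_ring_def)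

lemma vr_0[simp]: "0 \<in> val_ring val" by (simp add: vr_iff)
lemma vr_1[simp]: "1 \<in> val_ring val" by (simp add: vr_iff val_one)

lemma vr_add: "x \<in> val_ring val \<Longrightarrow> y \<in> val_ring val \<Longrightarrow> x + y \<in> val_ring val"
  unfolding vr_iff using val_add[of x y] by fastforce

lemma vr_mult: "x \<in> val_ring val \<Longrightarrow> y \<in> val_ring val \<Longrightarrow> x * y \<in> val_ring val"
  unfolding vr_iff using val_mult[of x y] by (cases "x = 0"; cases "y = 0") auto

lemma vr_minus: "x \<in> val_ring val \<Longrightarrow> - x \<in> val_ring val"
  unfolding vr_iff using val_minus[of x] by (cases "x = 0") auto

lemma vr_sum: "finite S \<Longrightarrow> (\<And>i. i \<in> S \<Longrightarrow> f i \<in> val_ring val) \<Longrightarrow> sum f S \<in> val_ring val"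
  by (induction S rule: finite_induct) (auto intro: vr_add)

context fixes \<sigma> :: 'a assumes unif: "\<sigma> \<noteq> 0" "val \<sigma> = 1"
begin

lemma val_pow: "val (\<sigma> ^ n) = int n"
  by (induction n) (auto simp: val_one val_mult unif)

lemma val_powi: "val (\<sigma> powi k) = k"
proof (cases "k \<ge> 0")
  case True
  then show ?thesis using val_pow[of "nat k"] by (metis nat_0_le power_int_of_nat)
next
  case False
  then have "\<sigma> powi k = inverse (\<sigma> powi (-k))" by (simp add: power_int_minus[of \<sigma> "-k", simplified])
  moreover have "\<sigma> powi (-k) = \<sigma> ^ nat (-k)" using False by (metis nat_0_le neg_0_le_iff_le not_le power_int_of_nat less_imp_le)
  ultimately show ?thesis using False val_pow[of "nat (-k)"] val_inverse unif by auto
qed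

lemma powi_nz: "\<sigma> powi k \<noteq> 0" using unif by (simp add: power_int_not_zero)

lemma powi_add: "\<sigma> powi (a + b) = \<sigma> powi a * \<sigma> powi b"
  using unif by (simp add: power_int_add)

lemma vr_powi: "k \<ge> 0 \<Longrightarrow> \<sigma> powi k \<in> val_ring val"
  by (simp add: vr_iff val_powi)

lemma vr_conj: "x \<in> val_ring val \<Longrightarrow> \<sigma> powi k * x * \<sigma> powi (-k) \<in> val_ring val"
  unfolding vr_iff using powi_nz val_mult val_powi by (cases "x = 0") auto

lemma vr_scale: "x = 0 \<or> val x \<ge> b - a \<Longrightarrow> \<sigma> powi a * x * \<sigma> powi (-b) \<in> val_ring val"
  unfolding vr_iff using powi_nz val_mult val_powi by (cases "x = 0") auto

end
end

lemma single_pow: "(Poly_Mapping.single (1::nat) (1::'a::division_ring)) ^ n = Poly_Mapping.single n 1"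
  by (induction n) (auto simp: mult_single)

lemma single_split: "Poly_Mapping.single (n::nat) (a::'a::division_ring) = Poly_Mapping.single 0 a * Poly_Mapping.single 1 1 ^ n"
  by (simp only: single_pow mult_single) simp

context fixes act :: "(nat \<Rightarrow>\<^sub>0 'a::division_ring) \<Rightarrow> 'm::ab_group_add \<Rightarrow> 'm"
  assumes LM: "left_module act"
begin

lemma act_addL: "act (g + h) x = act g x + act h x" using LM unfolding left_module_def by blast
lemma act_addR: "act g (x + y) = act g x + act g y" using LM unfolding left_module_def by blast
lemma act_mult: "act (g * h) x = act g (act h x)" using LM unfolding left_module_def by blast
lemma act_one: "act 1 x = x" using LM unfolding left_module_def by blast
lemma act_0L[simp]: "act 0 x = 0" using act_addL[of 0 0 x] by simp
lemma act_0R[simp]: "act g 0 = 0" using act_addR[of g 0 0] by simp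
lemma act_minusR: "act g (- x) = - act g x" using act_addR[of g x "-x"] by (simp add: eq_neg_iff_add_eq_0 add.commute)
lemma act_minusL: "act (- g) x = - act g x" using act_addL[of g "-g" x] by (simp add: eq_neg_iff_add_eq_0 add.commute)
lemma act_sumL: "act (sum f S) x = (\<Sum>i\<in>S. act (f i) x)"
  by (induction S rule: infinite_finite_induct) (auto simp: act_addL)
lemma act_sumR: "act g (sum f S) = (\<Sum>i\<in>S. act g (f i))"
  by (induction S rule: infinite_finite_induct) (auto simp: act_addR)

lemma scal_scal: "scal act a (scal act b x) = scal act (a * b) x"
  by (simp add: scal_def act_mult[symmetric] mult_single)
lemma scal_one[simp]: "scal act 1 x = x" by (simp add: scal_def act_one)
lemma scal_0L[simp]: "scal act 0 x = 0" by (simp add: scal_def)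
lemma scal_0R[simp]: "scal act a 0 = 0" by (simp add: scal_def)
lemma scal_addL: "scal act (a + b) x = scal act a x + scal act b x" by (simp add: scal_def single_add act_addL)
lemma scal_addR: "scal act a (x + y) = scal act a x + scal act a y" by (simp add: scal_def act_addR)
lemma scal_minusL: "scal act (- a) x = - scal act a x" by (simp add: scal_def single_uminus act_minusL)
lemma scal_minusR: "scal act a (- x) = - scal act a x" by (simp add: scal_def act_minusR)
lemma scal_sumR: "scal act a (sum f S) = (\<Sum>i\<in>S. scal act a (f i))" by (simp add: scal_def act_sumR)
lemma scal_sumL: "scal act (sum f S) x = (\<Sum>i\<in>S. scal act (f i) x)"
  by (induction S rule: infinite_finite_induct) (auto simp: scal_addL)

lemma tact_add: "tact act (x + y) = tact act x + tact act y" by (simp add: tact_def act_addR)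
lemma tact_scal: "tact act (scal act a x) = scal act a (tact act x)"
  by (simp add: tact_def scal_def act_mult[symmetric] mult_single)

lemma tpow_nat_add: "(tact act ^^ n) (x + y) = (tact act ^^ n) x + (tact act ^^ n) y"
  by (induction n) (auto simp: tact_add)
lemma tpow_nat_scal: "(tact act ^^ n) (scal act a x) = scal act a ((tact act ^^ n) x)"
  by (induction n) (auto simp: tact_scal)
lemma tpow_nat_0: "(tact act ^^ n) 0 = 0"
  by (induction n) (auto simp: tact_def)
lemma tpow_nat_sum: "(tact act ^^ n) (sum f S) = (\<Sum>i\<in>S. (tact act ^^ n) (f i))"
  by (induction S rule: infinite_finite_induct) (auto simp: tpow_nat_add tpow_nat_0)
lemma tpow_nat_minus: "(tact act ^^ n) (- x) = - (tact act ^^ n) x"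
  using tpow_nat_add[of n x "-x"] tpow_nat_0[of n] by (simp add: eq_neg_iff_add_eq_0 add.commute)

lemma act_pow: "act (g ^ n) x = (act g ^^ n) x"
  by (induction n arbitrary: x) (auto simp: act_one act_mult)

lemma act_single: "act (Poly_Mapping.single n a) x = scal act a ((tact act ^^ n) x)"
  by (simp add: single_split[of n a] act_mult act_pow scal_def tact_def)

end

context fixes val :: "'a::division_ring \<Rightarrow> int" and act :: "(nat \<Rightarrow>\<^sub>0 'a) \<Rightarrow> 'm::ab_group_add \<Rightarrow> 'm"
  assumes val: "discrete_valuation val" and LM: "left_module act"
begin

lemma ospan_iff: "x \<in> O_span val act G \<longleftrightarrow> (\<exists>a. (\<forall>g\<in>G. a g \<in> val_ring val) \<and> x = (\<Sum>g\<in>G. scal act (a g) g))"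
  unfolding O_span_def by blast

lemma ospan_0: "0 \<in> O_span val act G"
  unfolding ospan_iff by (rule exI[of _ "\<lambda>_. 0"]) (simp add: scal_0L[OF LM] vr_0[OF val])

lemma ospan_add: "x \<in> O_span val act G \<Longrightarrow> y \<in> O_span val act G \<Longrightarrow> x + y \<in> O_span val act G"
  unfolding ospan_iff
proof (elim exE conjE)
  fix a b assume a: "\<forall>g\<in>G. a g \<in> val_ring val" and x: "x = (\<Sum>g\<in>G. scal act (a g) g)"
    and b: "\<forall>g\<in>G. b g \<in> val_ring val" and y: "y = (\<Sum>g\<in>G. scal act (b g) g)"
  show "\<exists>c. (\<forall>g\<in>G. c g \<in> val_ring val) \<and> x + y = (\<Sum>g\<in>G. scal act (c g) g)"
    by (rule exI[of _ "\<lambda>g. a g + b g"])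
      (auto simp: a b x y vr_add[OF val] scal_addL[OF LM] sum.distrib)
qed

lemma ospan_scal: "x \<in> O_span val act G \<Longrightarrow> ob \<in> val_ring val \<Longrightarrow> scal act ob x \<in> O_span val act G"
  unfolding ospan_iff
proof (elim exE conjE)
  fix a assume a: "\<forall>g\<in>G. a g \<in> val_ring val" and x: "x = (\<Sum>g\<in>G. scal act (a g) g)"
    and ob: "ob \<in> val_ring val"
  show "\<exists>c. (\<forall>g\<in>G. c g \<in> val_ring val) \<and> scal act ob x = (\<Sum>g\<in>G. scal act (c g) g)"
    by (rule exI[of _ "\<lambda>g. ob * a g"])
      (auto simp: a ob x vr_mult[OF val] scal_sumR[OF LM] scal_scal[OF LM])
qed

lemma ospan_sum: "(\<And>i. i \<in> S \<Longrightarrow> f i \<in> O_span val act G) \<Longrightarrow> sum f S \<in> O_span val act G"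
  by (induction S rule: infinite_finite_induct) (auto simp: ospan_0 ospan_add)

lemma ospan_gen: "finite G \<Longrightarrow> g \<in> G \<Longrightarrow> g \<in> O_span val act G"
  unfolding ospan_iff
  by (rule exI[of _ "\<lambda>h. if h = g then 1 else 0"])
     (auto simp: vr_0[OF val] vr_1[OF val] if_distrib[of "\<lambda>a. scal act a _"] scal_0L[OF LM] scal_one[OF LM] cong: if_cong)

lemma ospan_combo: "finite I \<Longrightarrow> (\<And>i. i \<in> I \<Longrightarrow> b i \<in> val_ring val) \<Longrightarrow> (\<And>i. i \<in> I \<Longrightarrow> Y i \<in> O_span val act G)
   \<Longrightarrow> (\<Sum>i\<in>I. scal act (b i) (Y i)) \<in> O_span val act G"
  by (rule ospan_sum) (auto intro: ospan_scal)

lemma ospan_semilinear: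
  assumes fin: "finite G"
    and add: "\<And>x y. F (x + y) = F x + F y"
    and sc: "\<And>a x. F (scal act a x) = scal act (\<tau> a) (F x)"
    and tau: "\<And>a. a \<in> val_ring val \<Longrightarrow> \<tau> a \<in> val_ring val"
    and gen: "\<And>g. g \<in> G \<Longrightarrow> F g \<in> O_span val act H"
  shows "F ` O_span val act G \<subseteq> O_span val act H"
proof
  fix y assume "y \<in> F ` O_span val act G"
  then obtain a where a: "\<forall>g\<in>G. a g \<in> val_ring val" and y: "y = F (\<Sum>g\<in>G. scal act (a g) g)"
  proof -
    from \<open>y \<in> F ` O_span val act G\<close> obtain x where "x \<in> O_span val act G" "y = F x" by blast
    then show ?thesis using that unfolding ospan_iff by blast
  qed
  have Fsum: "\<And>S. finite S \<Longrightarrow> F (\<Sum>g\<in>S. scal act (a g) g) = (\<Sum>g\<in>S. F (scal act (a g) g))"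
  proof -
    fix S :: "'m set" assume "finite S"
    then show "F (\<Sum>g\<in>S. scal act (a g) g) = (\<Sum>g\<in>S. F (scal act (a g) g))"
    proof (induction S rule: finite_induct)
      case empty
      have "F 0 = F 0 + F 0" using add[of 0 0] by simp
      then show ?case by simp
    next
      case (insert x S) then show ?case by (simp add: add)
    qed
  qed
  have "y = (\<Sum>g\<in>G. scal act (\<tau> (a g)) (F g))" using Fsum[OF fin] y sc by simp
  also have "\<dots> \<in> O_span val act H" using fin a tau gen by (intro ospan_combo) auto
  finally show "y \<in> O_span val act H" .
qed

lemma ospan_image_combo:
  assumes "finite I" "\<And>i. i \<in> I \<Longrightarrow> b i \<in> val_ring val"
  shows "(\<Sum>i\<in>I. scal act (b i) (Y i)) \<in> O_span val act (Y ` I)"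
  using assms by (intro ospan_combo) (auto intro: ospan_gen)

end

definition aa :: "real \<Rightarrow> int \<Rightarrow> int" where "aa s k = \<lceil>of_int k * s\<rceil>"
definition cc :: "(nat \<Rightarrow> 'a::division_ring) \<Rightarrow> nat \<Rightarrow> nat \<Rightarrow> 'a" where "cc c d j = (if j < d then c j else 1)"
definition YY where "YY act (\<sigma>::'a::division_ring) s (E::int \<Rightarrow> 'm) k = scal act (\<sigma> powi aa s k) (E k)"
definition Lat where "Lat val act \<sigma> s d E = O_span val act (YY act \<sigma> s E ` {0..<int d})"
definition RelE where "RelE act c d (E::int \<Rightarrow> 'm::ab_group_add) k \<longleftrightarrow> (\<Sum>j\<le>d. scal act (cc c d j) (E (k + int j))) = 0"

lemma ceil_fwd:
  fixes s :: real assumes "real_of_int r = real d * s" "real_of_int v \<ge> real j * s - r"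
  shows "v \<ge> aa s (k + int j) - aa s (k + int d)"
proof -
  have "of_int (aa s (k + int j)) < (of_int k + j) * s + 1" "of_int (aa s (k + int d)) \<ge> (of_int k + d) * s"
    unfolding aa_def using ceiling_correct[of "(of_int k + j) * s"] ceiling_correct[of "(of_int k + d) * s"] by auto
  then have "real_of_int (aa s (k + int j) - aa s (k + int d)) < v + 1" using assms by (simp add: algebra_simps)
  then show ?thesis by linarith
qed

lemma ceil_bwd:
  fixes s :: real assumes "real_of_int v \<ge> real j * s"
  shows "v \<ge> aa s (k + int j) - aa s k"
proof -
  have "of_int (aa s (k + int j)) < (of_int k + j) * s + 1" "of_int (aa s k) \<ge> of_int k * s"
    unfolding aa_def using ceiling_correct[of "(of_int k + j) * s"] ceiling_correct[of "of_int k * s"] by auto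
  then have "real_of_int (aa s (k + int j) - aa s k) < v + 1" using assms by (simp add: algebra_simps)
  then show ?thesis by linarith
qed

locale setupD = fixes val :: "'a::division_ring \<Rightarrow> int" and act :: "(nat \<Rightarrow>\<^sub>0 'a) \<Rightarrow> 'm::ab_group_add \<Rightarrow> 'm"
  and \<sigma> :: 'a and c :: "nat \<Rightarrow> 'a" and d :: nat and s :: real and r :: int
  assumes val: "discrete_valuation val" and LM: "left_module act"
    and unif: "\<sigma> \<noteq> 0" "val \<sigma> = 1" and d: "d \<ge> 1" and c0: "c 0 \<noteq> 0"
    and r: "real_of_int r = real d * s"
    and vc0: "val (c 0) = - r"
    and vc: "\<And>j. j < d \<Longrightarrow> c j \<noteq> 0 \<Longrightarrow> real_of_int (val (c j)) \<ge> real j * s - r"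
begin

lemma vcc: "j \<le> d \<Longrightarrow> cc c d j \<noteq> 0 \<Longrightarrow> real_of_int (val (cc c d j)) \<ge> real j * s - r"
  using vc[of j] r val_one[OF val] by (cases "j < d") (auto simp: cc_def)

lemma E_from_Y: "E k = scal act (\<sigma> powi (- aa s k)) (YY act \<sigma> s E k)"
  unfolding YY_def scal_scal[OF LM] powi_add[OF val unif, symmetric] by (simp add: scal_one[OF LM])

lemma powi_cancel: "\<sigma> powi (- a) * \<sigma> powi a = 1" "\<sigma> powi (- a) * (\<sigma> powi a * x) = x"
  using powi_add[OF val unif, of "-a" a] by (simp_all add: mult.assoc[symmetric])

lemma fwd:
  assumes "RelE act c d E k"
  shows "YY act \<sigma> s E (k + int d) = (\<Sum>j<d. scal act (- (\<sigma> powi aa s (k + int d) * cc c d j * \<sigma> powi (- aa s (k + int j)))) (YY act \<sigma> s E (k + int j)))"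
proof -
  have "(\<Sum>j\<le>d. scal act (cc c d j) (E (k + int j))) = 0" using assms unfolding RelE_def .
  then have "(\<Sum>j<d. scal act (cc c d j) (E (k + int j))) + E (k + int d) = 0"
    by (simp add: lessThan_Suc_atMost[symmetric] cc_def scal_one[OF LM])
  then have Ek: "E (k + int d) = - (\<Sum>j<d. scal act (cc c d j) (E (k + int j)))"
    by (simp add: eq_neg_iff_add_eq_0 add.commute)
  show ?thesis
    apply (subst YY_def)
    apply (simp add: Ek scal_minusR[OF LM] scal_sumR[OF LM] scal_minusL[OF LM] sum_negf[symmetric])
    apply (rule sum.cong, simp)
    apply (subst YY_def)
    apply (simp add: scal_scal[OF LM] mult.assoc powi_cancel)
    done
qed

lemma fwd_coef: "\<sigma> powi aa s (k + int d) * cc c d j * \<sigma> powi (- aa s (k + int j)) \<in> val_ring val" if "j < d"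
proof (rule vr_scale[OF val unif])
  show "cc c d j = 0 \<or> aa s (k + int j) - aa s (k + int d) \<le> val (cc c d j)"
    using vcc[of j] that ceil_fwd[OF r, where v="val (cc c d j)" and j=j and k=k] by force
qed

lemma bwd:
  assumes "RelE act c d E k"
  shows "YY act \<sigma> s E k = (\<Sum>j<d. scal act (- (\<sigma> powi aa s k * (inverse (c 0) * cc c d (Suc j)) * \<sigma> powi (- aa s (k + int (Suc j))))) (YY act \<sigma> s E (k + int (Suc j))))"
proof -
  obtain d' where d': "d = Suc d'" using d by (cases d) auto
  have "(\<Sum>j\<le>d. scal act (cc c d j) (E (k + int j))) = 0" using assms unfolding RelE_def .
  moreover have "(\<Sum>j\<le>d. scal act (cc c d j) (E (k + int j))) = scal act (cc c d 0) (E (k + int 0)) + (\<Sum>j<d. scal act (cc c d (Suc j)) (E (k + int (Suc j))))"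
    by (simp only: d' sum.atMost_Suc_shift lessThan_Suc_atMost)
  moreover have "cc c d 0 = c 0" using d by (simp add: cc_def)
  ultimately have "scal act (c 0) (E k) + (\<Sum>j<d. scal act (cc c d (Suc j)) (E (k + int (Suc j)))) = 0"
    by simp
  then have "scal act (c 0) (E k) = - (\<Sum>j<d. scal act (cc c d (Suc j)) (E (k + int (Suc j))))"
    by (simp add: eq_neg_iff_add_eq_0)
  then have "scal act (inverse (c 0)) (scal act (c 0) (E k)) = scal act (inverse (c 0)) (- (\<Sum>j<d. scal act (cc c d (Suc j)) (E (k + int (Suc j)))))"
    by simp
  then have Ek: "E k = - (\<Sum>j<d. scal act (inverse (c 0) * cc c d (Suc j)) (E (k + int (Suc j))))"
    using c0 by (simp add: scal_scal[OF LM] scal_minusR[OF LM] scal_sumR[OF LM] scal_one[OF LM])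
  show ?thesis
    apply (subst YY_def)
    apply (subst Ek)
    apply (simp add: scal_minusR[OF LM] scal_sumR[OF LM] scal_minusL[OF LM] sum_negf[symmetric])
    apply (rule sum.cong, simp)
    apply (subst YY_def)
    apply (simp add: scal_scal[OF LM] mult.assoc powi_cancel)
    done
qed

lemma bwd_coef: "\<sigma> powi aa s k * (inverse (c 0) * cc c d (Suc j)) * \<sigma> powi (- aa s (k + int (Suc j))) \<in> val_ring val" if "j < d"
proof (rule vr_scale[OF val unif])
  have "inverse (c 0) * cc c d (Suc j) = 0 \<or> real_of_int (val (inverse (c 0) * cc c d (Suc j))) \<ge> real (Suc j) * s"
  proof (cases "cc c d (Suc j) = 0")
    case False
    then have "val (inverse (c 0) * cc c d (Suc j)) = r + val (cc c d (Suc j))"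
      using c0 val_mult[OF val] val_inverse[OF val] vc0 by simp
    then show ?thesis using vcc[of "Suc j"] that False by simp
  qed simp
  then show "inverse (c 0) * cc c d (Suc j) = 0 \<or> aa s (k + int (Suc j)) - aa s k \<le> val (inverse (c 0) * cc c d (Suc j))"
    using ceil_bwd by blast
qed

lemma Y_gen: "0 \<le> k \<Longrightarrow> k < int d \<Longrightarrow> YY act \<sigma> s E k \<in> Lat val act \<sigma> s d E"
  unfolding Lat_def by (rule ospan_gen[OF val LM]) auto

lemma Y_pos:
  assumes rel: "\<And>k. 0 \<le> k \<Longrightarrow> RelE act c d E k"
  shows "YY act \<sigma> s E (int n) \<in> Lat val act \<sigma> s d E"
proof (induction n rule: less_induct)
  case (less n)
  show ?case
  proof (cases "n < d")
    case True then show ?thesis by (intro Y_gen) auto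
  next
    case False
    define k where "k = int n - int d"
    have k: "0 \<le> k" "int n = k + int d" using False by (auto simp: k_def)
    have IH: "YY act \<sigma> s E (k + int j) \<in> Lat val act \<sigma> s d E" if "j < d" for j
    proof -
      have lt: "nat (k + int j) < n" using k that by linarith
      have eq: "int (nat (k + int j)) = k + int j" using k by linarith
      show ?thesis using less[OF lt] unfolding eq .
    qed
    show ?thesis
      unfolding k(2) fwd[OF rel[OF k(1)]]
      unfolding Lat_def
    proof (rule ospan_combo[OF val LM])
      fix j assume j: "j \<in> {..<d}"
      show "- (\<sigma> powi aa s (k + int d) * cc c d j * \<sigma> powi (- aa s (k + int j))) \<in> val_ring val"
        by (rule vr_minus[OF val], rule fwd_coef) (use j in simp)
      show "YY act \<sigma> s E (k + int j) \<in> O_span val act (YY act \<sigma> s E ` {0..<int d})"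
        using IH[of j] j unfolding Lat_def by simp
    qed simp
  qed
qed

lemma Y_all:
  assumes rel: "\<And>k. RelE act c d E k"
  shows "YY act \<sigma> s E k \<in> Lat val act \<sigma> s d E"
proof (cases "k \<ge> 0")
  case True then show ?thesis using Y_pos[OF rel, of "nat k"] by simp
next
  case False
  have neg: "YY act \<sigma> s E (- int m - 1) \<in> Lat val act \<sigma> s d E" for m
  proof (induction m rule: less_induct)
    case (less m)
    have IH: "YY act \<sigma> s E (- int m - 1 + int (Suc j)) \<in> Lat val act \<sigma> s d E" for j
    proof (cases "- int m - 1 + int (Suc j) \<ge> 0")
      case True
      have e: "int (nat (- int m - 1 + int (Suc j))) = - int m - 1 + int (Suc j)" using True by linarith
      show ?thesis using Y_pos[OF rel, of "nat (- int m - 1 + int (Suc j))"] unfolding e .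
    next
      case False
      then have e: "- int m - 1 + int (Suc j) = - int (m - Suc j) - 1" and lt: "m - Suc j < m" by linarith+
      show ?thesis unfolding e by (rule less[OF lt])
    qed
    show ?case
      apply (subst bwd[OF rel])
      unfolding Lat_def
    proof (rule ospan_combo[OF val LM])
      fix j assume j: "j \<in> {..<d}"
      show "- (\<sigma> powi aa s (- int m - 1) * (inverse (c 0) * cc c d (Suc j)) * \<sigma> powi (- aa s (- int m - 1 + int (Suc j)))) \<in> val_ring val"
        by (rule vr_minus[OF val], rule bwd_coef) (use j in simp)
      show "YY act \<sigma> s E (- int m - 1 + int (Suc j)) \<in> O_span val act (YY act \<sigma> s E ` {0..<int d})"
        using IH[of j] unfolding Lat_def by simp
    qed simp
  qed
  have e: "- int (nat (- k - 1)) - 1 = k" using False by linarith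
  from neg[of "nat (- k - 1)"] show ?thesis unfolding e .
qed

end

lemma ospan_index:
  assumes LM: "left_module act" and fin: "finite I" and x: "x \<in> O_span val act (Y ` I)"
  shows "\<exists>b. (\<forall>i\<in>I. b i \<in> val_ring val) \<and> x = (\<Sum>i\<in>I. scal act (b i) (Y i))"
proof -
  obtain a where a: "\<forall>g\<in>Y ` I. a g \<in> val_ring val" and xs: "x = (\<Sum>g\<in>Y ` I. scal act (a g) g)"
    using x unfolding O_span_def by blast
  define R where "R = inv_into I Y ` (Y ` I)"
  have RI: "R \<subseteq> I" unfolding R_def by (auto intro: inv_into_into)
  define b where "b i = (if i \<in> R then a (Y i) else 0)" for i
  have "(\<Sum>i\<in>I. scal act (b i) (Y i)) = (\<Sum>i\<in>I. if i \<in> R then scal act (a (Y i)) (Y i) else scal act 0 (Y i))"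
    unfolding b_def by (rule sum.cong) auto
  also have "\<dots> = (\<Sum>i\<in>I. if i \<in> R then scal act (a (Y i)) (Y i) else 0)"
    by (rule sum.cong) (auto simp: scal_0L[OF LM])
  also have "\<dots> = (\<Sum>i\<in>R. scal act (a (Y i)) (Y i))"
    using fin RI by (simp add: sum.If_cases Int_absorb1)
  also have "\<dots> = (\<Sum>g\<in>Y ` I. scal act (a (Y (inv_into I Y g))) (Y (inv_into I Y g)))"
    unfolding R_def by (rule sum.reindex[unfolded comp_def]) (rule inj_on_inv_into, simp)
  also have "\<dots> = x" unfolding xs by (rule sum.cong) (auto simp: f_inv_into_f)
  finally have "x = (\<Sum>i\<in>I. scal act (b i) (Y i))" ..
  moreover have "\<forall>i\<in>I. b i \<in> val_ring val" using a unfolding b_def val_ring_def by auto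
  ultimately show ?thesis by blast
qed

definition en where "en act m0 n = (tact act ^^ n) m0"

lemma keys_sum_single: "(g :: nat \<Rightarrow>\<^sub>0 'a::division_ring) = (\<Sum>k\<in>Poly_Mapping.keys g. Poly_Mapping.single k (Poly_Mapping.lookup g k))"
proof (rule poly_mapping_eqI)
  fix i
  show "Poly_Mapping.lookup g i = Poly_Mapping.lookup (\<Sum>k\<in>Poly_Mapping.keys g. Poly_Mapping.single k (Poly_Mapping.lookup g k)) i"
    by (simp add: lookup_sum lookup_single when_def in_keys_iff)
qed

lemma monic_sum: "monic_poly c d = (\<Sum>j\<le>d. Poly_Mapping.single j (cc c d j))"
  unfolding monic_poly_def cc_def by (simp add: lessThan_Suc_atMost[symmetric])

lemma lookup_hf:
  fixes h :: "nat \<Rightarrow>\<^sub>0 'a::division_ring"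
  assumes "h \<noteq> 0"
  shows "Poly_Mapping.lookup (h * monic_poly c d) (Max (Poly_Mapping.keys h) + d) = Poly_Mapping.lookup h (Max (Poly_Mapping.keys h))"
proof -
  define K where "K = Poly_Mapping.keys h"
  define n where "n = Max K"
  have fK: "finite K" unfolding K_def by simp
  have Kne: "K \<noteq> {}" using assms unfolding K_def by simp
  have nK: "n \<in> K" "\<And>k. k \<in> K \<Longrightarrow> k \<le> n" unfolding n_def using fK Kne by auto
  have key: "k = n \<and> j = d" if "k \<in> K" "j \<le> d" "k + j = n + d" for k j
  proof -
    have "k \<le> n" using nK(2) that(1) by blast
    then show ?thesis using that by linarith
  qed
  have "h * monic_poly c d = (\<Sum>k\<in>K. \<Sum>j\<le>d. Poly_Mapping.single (k + j) (Poly_Mapping.lookup h k * cc c d j))"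
    apply (subst keys_sum_single[of h])
    unfolding monic_sum K_def
    by (simp add: sum_distrib_left sum_distrib_right mult_single sum.swap[of _ "{..d}"])
  then have "Poly_Mapping.lookup (h * monic_poly c d) (n + d) =
      (\<Sum>k\<in>K. \<Sum>j\<le>d. Poly_Mapping.lookup (Poly_Mapping.single (k + j) (Poly_Mapping.lookup h k * cc c d j)) (n + d))"
    by (simp add: lookup_sum)
  also have "\<dots> = (\<Sum>k\<in>K. \<Sum>j\<le>d. if k = n \<and> j = d then Poly_Mapping.lookup h k * cc c d j else 0)"
  proof (rule sum.cong[OF refl], rule sum.cong[OF refl])
    fix k j assume "k \<in> K" "j \<in> {..d}"
    then show "Poly_Mapping.lookup (Poly_Mapping.single (k + j) (Poly_Mapping.lookup h k * cc c d j)) (n + d) =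
      (if k = n \<and> j = d then Poly_Mapping.lookup h k * cc c d j else 0)"
      using key[of k j] by (auto simp: lookup_single when_def)
  qed
  also have "\<dots> = (\<Sum>k\<in>K. if k = n then Poly_Mapping.lookup h k * cc c d d else 0)"
  proof (rule sum.cong[OF refl])
    fix k
    show "(\<Sum>j\<le>d. if k = n \<and> j = d then Poly_Mapping.lookup h k * cc c d j else 0) = (if k = n then Poly_Mapping.lookup h k * cc c d d else 0)"
      by (cases "k = n") (simp_all add: sum.delta')
  qed
  also have "\<dots> = Poly_Mapping.lookup h n * cc c d d"
    using nK(1) fK by (simp add: sum.delta')
  finally show ?thesis unfolding n_def K_def cc_def by simp
qed


lemma sum_int_range: "(\<Sum>i\<in>{0..<int d}. f i) = (\<Sum>i<d. f (int i))"
proof -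
  have "{0..<int d} = int ` {..<d}" using image_atLeastZeroLessThan_int[of "int d"] by simp
  then show ?thesis by (simp add: sum.reindex)
qed

locale setupF = setupD +
  fixes m0
  assumes iso: "\<And>g. act g m0 = 0 \<longleftrightarrow> (\<exists>h. g = h * monic_poly c d)"
    and span0: "\<And>x. \<exists>g. x = act g m0"
begin

abbreviation "e \<equiv> en act m0"

lemma act_monic: "act (monic_poly c d) m0 = (\<Sum>j\<le>d. scal act (cc c d j) (e j))"
  unfolding monic_sum act_sumL[OF LM] act_single[OF LM] en_def ..

lemma rel_nat: "(\<Sum>j\<le>d. scal act (cc c d j) (e (n + j))) = 0"
proof -
  have 0: "(\<Sum>j\<le>d. scal act (cc c d j) (e j)) = 0"
    using iso[of "monic_poly c d"] act_monic by (metis mult_1)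
  have "(tact act ^^ n) (\<Sum>j\<le>d. scal act (cc c d j) (e j)) = (\<Sum>j\<le>d. scal act (cc c d j) (e (n + j)))"
    by (simp add: tpow_nat_sum[OF LM] tpow_nat_scal[OF LM] en_def funpow_add)
  then show ?thesis using 0 tpow_nat_0[OF LM] by simp
qed

lemma Lat_coords:
  assumes "x \<in> Lat val act \<sigma> s d E"
  shows "\<exists>b. (\<forall>i<d. b i \<in> val_ring val) \<and> x = (\<Sum>i<d. scal act (b i * \<sigma> powi aa s (int i)) (E (int i)))"
proof -
  obtain b where b: "\<forall>i\<in>{0..<int d}. b i \<in> val_ring val" and x: "x = (\<Sum>i\<in>{0..<int d}. scal act (b i) (YY act \<sigma> s E i))"
    using ospan_index[OF LM _ assms[unfolded Lat_def]] by blast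
  show ?thesis
    apply (rule exI[of _ "\<lambda>i. b (int i)"])
    using b x by (auto simp: sum_int_range YY_def scal_scal[OF LM])
qed

definition "Lsp = {x. \<exists>\<beta>. x = (\<Sum>i<d. scal act (\<beta> i) (e i))}"

lemma Lsp_add: "x \<in> Lsp \<Longrightarrow> y \<in> Lsp \<Longrightarrow> x + y \<in> Lsp"
  unfolding Lsp_def
proof (elim CollectE exE, intro CollectI)
  fix \<alpha> \<beta> assume "x = (\<Sum>i<d. scal act (\<alpha> i) (e i))" "y = (\<Sum>i<d. scal act (\<beta> i) (e i))"
  then show "\<exists>\<gamma>. x + y = (\<Sum>i<d. scal act (\<gamma> i) (e i))"
    by (intro exI[of _ "\<lambda>i. \<alpha> i + \<beta> i"]) (simp add: scal_addL[OF LM] sum.distrib)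
qed

lemma Lsp_scal: "x \<in> Lsp \<Longrightarrow> scal act a x \<in> Lsp"
  unfolding Lsp_def
proof (elim CollectE exE, intro CollectI)
  fix \<alpha> assume "x = (\<Sum>i<d. scal act (\<alpha> i) (e i))"
  then show "\<exists>\<gamma>. scal act a x = (\<Sum>i<d. scal act (\<gamma> i) (e i))"
    by (intro exI[of _ "\<lambda>i. a * \<alpha> i"]) (simp add: scal_sumR[OF LM] scal_scal[OF LM])
qed

lemma Lsp_0: "0 \<in> Lsp"
  unfolding Lsp_def by (intro CollectI exI[of _ "\<lambda>i. 0"]) (simp add: scal_0L[OF LM])

lemma Lsp_sum: "(\<And>i. i \<in> S \<Longrightarrow> f i \<in> Lsp) \<Longrightarrow> sum f S \<in> Lsp"
  by (induction S rule: infinite_finite_induct) (auto simp: Lsp_0 Lsp_add)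

abbreviation "Ep \<equiv> (\<lambda>k::int. e (nat k))"

lemma rel_pos: "0 \<le> k \<Longrightarrow> RelE act c d Ep k"
  unfolding RelE_def using rel_nat[of "nat k"] by (simp add: nat_add_distrib)

lemma e_base: "i < d \<Longrightarrow> e i \<in> Lsp"
  unfolding Lsp_def
proof (intro CollectI exI[of _ "\<lambda>j. if j = i then 1 else 0"])
  assume "i < d"
  have "(\<Sum>j<d. scal act (if j = i then 1 else 0) (e j)) = (\<Sum>j<d. if j = i then e j else 0)"
    by (rule sum.cong) (auto simp: scal_one[OF LM] scal_0L[OF LM])
  also have "\<dots> = e i" using \<open>i < d\<close> by (simp add: sum.delta)
  finally show "e i = (\<Sum>j<d. scal act (if j = i then 1 else 0) (e j))" ..
qed

lemma e_Lsp: "e k \<in> Lsp"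
proof -
  have "YY act \<sigma> s Ep (int k) \<in> Lat val act \<sigma> s d Ep" by (rule Y_pos[OF rel_pos])
  from Lat_coords[OF this] obtain b where b0: "YY act \<sigma> s Ep (int k) = (\<Sum>i<d. scal act (b i * \<sigma> powi aa s (int i)) (Ep (int i)))"
    by blast
  then have b: "YY act \<sigma> s Ep (int k) = (\<Sum>i<d. scal act (b i * \<sigma> powi aa s (int i)) (e i))" by simp
  have "e k = scal act (\<sigma> powi (- aa s (int k))) (YY act \<sigma> s Ep (int k))"
    using E_from_Y[of Ep "int k"] by simp
  also have "\<dots> \<in> Lsp" unfolding b
    by (rule Lsp_scal, rule Lsp_sum, rule Lsp_scal, rule e_base) simp
  finally show ?thesis .
qed

end

context setupF begin

lemma tact_sum: "tact act (sum f S) = (\<Sum>i\<in>S. tact act (f i))"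
  using tpow_nat_sum[OF LM, of 1] by simp

lemma tact_minus: "tact act (- x) = - tact act x"
  using tpow_nat_minus[OF LM, of 1] by simp

lemma e_Suc: "e (Suc i) = tact act (e i)" by (simp add: en_def)
lemma e_0: "e 0 = m0" by (simp add: en_def)

lemma span_all: "x \<in> Lsp"
proof -
  obtain g where g: "x = act g m0" using span0 by blast
  have "x = (\<Sum>k\<in>Poly_Mapping.keys g. scal act (Poly_Mapping.lookup g k) (e k))"
    unfolding g by (subst keys_sum_single[of g]) (simp add: act_sumL[OF LM] act_single[OF LM] en_def)
  also have "\<dots> \<in> Lsp" by (intro Lsp_sum Lsp_scal e_Lsp)
  finally show ?thesis .
qed

lemma coords: "\<exists>\<beta>. x = (\<Sum>i<d. scal act (\<beta> i) (e i))"
  using span_all unfolding Lsp_def by blast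

lemma indep:
  assumes z: "(\<Sum>i<d. scal act (\<beta> i) (e i)) = 0" and i: "i < d"
  shows "\<beta> i = 0"
proof -
  define p where "p = (\<Sum>i<d. Poly_Mapping.single i (\<beta> i))"
  have "act p m0 = (\<Sum>i<d. scal act (\<beta> i) (e i))"
    unfolding p_def by (simp add: act_sumL[OF LM] act_single[OF LM] en_def)
  then have "act p m0 = 0" using z by simp
  then have "\<exists>h. p = h * monic_poly c d" by (simp only: iso)
  then obtain h where h: "p = h * monic_poly c d" by blast
  have lk: "Poly_Mapping.lookup p k = (if k < d then \<beta> k else 0)" for k
  proof -
    have "Poly_Mapping.lookup p k = (\<Sum>i<d. if i = k then \<beta> i else 0)"
      unfolding p_def lookup_sum by (rule sum.cong) (auto simp: lookup_single when_def)
    also have "\<dots> = (if k < d then \<beta> k else 0)" by (simp add: sum.delta')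
    finally show ?thesis .
  qed
  have "h = 0"
  proof (rule ccontr)
    assume hnz: "h \<noteq> 0"
    define n where "n = Max (Poly_Mapping.keys h)"
    have "n \<in> Poly_Mapping.keys h" unfolding n_def using hnz by (intro Max_in) auto
    then have "Poly_Mapping.lookup h n \<noteq> 0" by (simp add: in_keys_iff)
    moreover have "Poly_Mapping.lookup p (n + d) = Poly_Mapping.lookup h n"
      unfolding h n_def by (rule lookup_hf[OF hnz])
    ultimately show False using lk[of "n + d"] by simp
  qed
  then have "p = 0" using h by simp
  then show ?thesis using lk[of i] i by simp
qed

lemma scal_diffL: "scal act (a - b) x = scal act a x - scal act b x"
  using scal_addL[OF LM, of a "-b" x] scal_minusL[OF LM, of b x] by simp

lemma indep_eq:
  assumes "(\<Sum>i<d. scal act (\<beta> i) (e i)) = (\<Sum>i<d. scal act (\<gamma> i) (e i))" "i < d"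
  shows "\<beta> i = \<gamma> i"
proof -
  have "(\<Sum>i<d. scal act (\<beta> i - \<gamma> i) (e i)) = 0"
    using assms(1) by (simp add: scal_diffL sum_subtractf)
  from indep[OF this assms(2)] show ?thesis by simp
qed

lemma m0_nz: "m0 \<noteq> 0"
proof
  assume "m0 = 0"
  have "(\<Sum>i<d. scal act (if i = 0 then 1 else 0) (e i)) = (\<Sum>i<d. if i = 0 then e i else 0)"
    by (rule sum.cong) (auto simp: scal_one[OF LM] scal_0L[OF LM])
  also have "\<dots> = e 0" using d by (simp add: sum.delta)
  also have "\<dots> = 0" using \<open>m0 = 0\<close> e_0 by simp
  finally have "(if (0::nat) = 0 then 1 else 0 :: 'a) = 0" by (rule indep) (use d in simp)
  then show False by simp
qed

lemma rel0_split: "scal act (c 0) m0 + (\<Sum>j<d. scal act (cc c d (Suc j)) (e (Suc j))) = 0"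
proof -
  obtain d' where d': "d = Suc d'" using d by (cases d) auto
  have "(\<Sum>j\<le>d. scal act (cc c d j) (e (0 + j))) = 0" by (rule rel_nat)
  moreover have "(\<Sum>j\<le>d. scal act (cc c d j) (e (0 + j))) = scal act (cc c d 0) (e 0) + (\<Sum>j<d. scal act (cc c d (Suc j)) (e (Suc j)))"
    by (simp only: d' sum.atMost_Suc_shift lessThan_Suc_atMost) simp
  moreover have "cc c d 0 = c 0" using d by (simp add: cc_def)
  ultimately show ?thesis using e_0 by simp
qed

lemma ed: "e d = - (\<Sum>j<d. scal act (c j) (e j))"
proof -
  have "(\<Sum>j\<le>d. scal act (cc c d j) (e (0 + j))) = 0" by (rule rel_nat)
  then have "(\<Sum>j<d. scal act (c j) (e j)) + e d = 0"
    by (simp add: lessThan_Suc_atMost[symmetric] cc_def scal_one[OF LM])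
  then show ?thesis by (simp add: eq_neg_iff_add_eq_0 add.commute)
qed

lemma tact_inj0:
  assumes "tact act x = 0" shows "x = 0"
proof -
  obtain d' where d': "d = Suc d'" using d by (cases d) auto
  obtain \<beta> where x: "x = (\<Sum>i<d. scal act (\<beta> i) (e i))" using coords by blast
  define \<gamma> where "\<gamma> i = (if i = 0 then 0 else \<beta> (i - 1)) + - (\<beta> d' * c i)" for i
  have "tact act x = (\<Sum>i<d. scal act (\<beta> i) (e (Suc i)))"
    unfolding x by (simp add: tact_sum tact_scal[OF LM] e_Suc)
  also have "\<dots> = (\<Sum>i<d'. scal act (\<beta> i) (e (Suc i))) + scal act (\<beta> d') (e d)"
    by (simp add: d')
  also have "(\<Sum>i<d'. scal act (\<beta> i) (e (Suc i))) = (\<Sum>i<d. scal act (if i = 0 then 0 else \<beta> (i - 1)) (e i))"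
    by (simp only: d' sum.lessThan_Suc_shift) (simp add: scal_0L[OF LM])
  also have "scal act (\<beta> d') (e d) = (\<Sum>i<d. scal act (- (\<beta> d' * c i)) (e i))"
    by (simp add: ed scal_minusR[OF LM] scal_sumR[OF LM] scal_scal[OF LM] scal_minusL[OF LM] sum_negf)
  finally have "tact act x = (\<Sum>i<d. scal act (\<gamma> i) (e i))"
    by (simp add: \<gamma>_def scal_diffL sum_subtractf scal_minusL[OF LM] sum_negf)
  then have g0: "\<gamma> i = 0" if "i < d" for i using assms indep that by simp
  have bd: "\<beta> d' = 0" using g0[of 0] c0 d by (simp add: \<gamma>_def)
  have "\<beta> i = 0" if "i < d" for i
  proof (cases "i = d'")
    case False
    then have "i < d'" using that d' by simp
    then show ?thesis using g0[of "Suc i"] bd d' by (simp add: \<gamma>_def)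
  qed (simp add: bd)
  then show ?thesis unfolding x by (simp add: scal_0L[OF LM])
qed

lemma tact_diff: "tact act (x - y) = tact act x - tact act y"
  using tact_add[OF LM, of x "-y"] tact_minus[of y] by simp

lemma tact_inj: "inj (tact act)"
proof (rule injI)
  fix x y assume "tact act x = tact act y"
  then have "tact act (x - y) = 0" by (simp add: tact_diff)
  then show "x = y" using tact_inj0[of "x - y"] by simp
qed

lemma tact_surj: "surj (tact act)"
proof -
  define z0 where "z0 = scal act (inverse (c 0)) (- (\<Sum>j<d. scal act (cc c d (Suc j)) (e j)))"
  have "tact act z0 = scal act (inverse (c 0)) (- (\<Sum>j<d. scal act (cc c d (Suc j)) (e (Suc j))))"
    unfolding z0_def by (simp add: tact_scal[OF LM] tact_minus tact_sum e_Suc)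
  also have "- (\<Sum>j<d. scal act (cc c d (Suc j)) (e (Suc j))) = scal act (c 0) m0"
    using rel0_split eq_neg_iff_add_eq_0 by (metis minus_minus)
  finally have z0: "tact act z0 = m0" using c0 by (simp add: scal_scal[OF LM] scal_one[OF LM])
  have "\<forall>i. \<exists>w. e i = tact act w"
  proof
    fix i show "\<exists>w. e i = tact act w"
    proof (cases i)
      case 0 then show ?thesis using e_0 z0 by metis
    next
      case (Suc j) then show ?thesis using e_Suc by blast
    qed
  qed
  then obtain W where W: "\<And>i. e i = tact act (W i)" by metis
  show ?thesis
    unfolding surj_def
  proof
    fix x
    obtain \<beta> where x: "x = (\<Sum>i<d. scal act (\<beta> i) (e i))" using coords by blast
    have "x = tact act (\<Sum>i<d. scal act (\<beta> i) (W i))"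
      unfolding x by (simp add: tact_sum tact_scal[OF LM] W)
    then show "\<exists>w. x = tact act w" by blast
  qed
qed

lemma tact_bij: "bij (tact act)" using tact_inj tact_surj by (simp add: bij_def)

end

definition Pw :: "('m \<Rightarrow> 'm) \<Rightarrow> int \<Rightarrow> 'm \<Rightarrow> 'm" where
  "Pw f u = (if 0 \<le> u then f ^^ nat u else inv f ^^ nat (- u))"

lemma Pw_0: "Pw f 0 = id" by (simp add: Pw_def)

lemma Pw_succ: assumes "bij f" shows "Pw f (u + 1) = f \<circ> Pw f u"
proof (cases "0 \<le> u")
  case True
  then have "nat (u + 1) = Suc (nat u)" by simp
  then show ?thesis using True by (simp add: Pw_def)
next
  case False
  then have n: "nat (- u) = Suc (nat (- (u + 1)))" by simp
  have "f \<circ> inv f = id" using assms bij_is_surj surj_iff by blast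
  then have "f \<circ> (inv f ^^ Suc m) = inv f ^^ m" for m
  proof -
    have "f \<circ> (inv f ^^ Suc m) = (f \<circ> inv f) \<circ> (inv f ^^ m)" by (simp only: funpow.simps comp_assoc)
    then show ?thesis using \<open>f \<circ> inv f = id\<close> by simp
  qed
  then show ?thesis using False n by (simp add: Pw_def)
qed

lemma Pw_pred: assumes "bij f" shows "Pw f (u - 1) = inv f \<circ> Pw f u"
proof (cases "0 < u")
  case True
  then have n: "nat u = Suc (nat (u - 1))" by simp
  have "inv f \<circ> f = id" using assms bij_is_inj inj_iff by blast
  then have "inv f \<circ> (f ^^ Suc m) = f ^^ m" for m
  proof -
    have "inv f \<circ> (f ^^ Suc m) = (inv f \<circ> f) \<circ> (f ^^ m)" by (simp only: funpow.simps comp_assoc)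
    then show ?thesis using \<open>inv f \<circ> f = id\<close> by simp
  qed
  then show ?thesis using True n by (simp add: Pw_def)
next
  case False
  then have "nat (- (u - 1)) = Suc (nat (- u))" by simp
  then show ?thesis using False by (simp add: Pw_def)
qed

lemma Pw_add: assumes "bij f" shows "Pw f (a + b) = Pw f a \<circ> Pw f b"
proof (induction a rule: int_induct[where k = 0])
  case base then show ?case by (simp add: Pw_0)
next
  case (step1 i)
  have "Pw f (i + 1 + b) = Pw f ((i + b) + 1)" by (rule arg_cong[where f="Pw f"]) simp
  also have "\<dots> = f \<circ> Pw f (i + b)" by (rule Pw_succ[OF assms])
  also have "\<dots> = Pw f (i + 1) \<circ> Pw f b" using step1 Pw_succ[OF assms, of i] by (simp add: comp_def)
  finally show ?case .
next
  case (step2 i)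
  have "Pw f (i - 1 + b) = Pw f ((i + b) - 1)" by (rule arg_cong[where f="Pw f"]) simp
  also have "\<dots> = inv f \<circ> Pw f (i + b)" by (rule Pw_pred[OF assms])
  also have "\<dots> = Pw f (i - 1) \<circ> Pw f b" using step2 Pw_pred[OF assms, of i] by (simp add: comp_def)
  finally show ?case .
qed

lemma funpow_hom:
  fixes F :: "'a \<Rightarrow> 'a"
  assumes "\<And>x. F (g x) = g (F x)" shows "(F ^^ n) (g x) = g ((F ^^ n) x)"
  by (induction n) (simp_all add: assms)

lemma funpow_add_hom:
  fixes F :: "'a::plus \<Rightarrow> 'a"
  assumes "\<And>x y. F (x + y) = F x + F y" shows "(F ^^ n) (x + y) = (F ^^ n) x + (F ^^ n) y"
  by (induction n) (simp_all add: assms)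

context setupF begin

abbreviation "T \<equiv> tact act"

lemma tpow_Pw: "tpow act u = Pw T u" by (simp add: tpow_def Pw_def)

lemma tpow_add: "tpow act (a + b) x = tpow act a (tpow act b x)"
  unfolding tpow_Pw Pw_add[OF tact_bij] by simp

lemma tpow_nat: "tpow act (int n) = T ^^ n" by (simp add: tpow_def)

lemma inv_T_add: "inv T (x + y) = inv T x + inv T y"
proof -
  have fi: "T (inv T z) = z" for z using tact_bij by (simp add: bij_is_surj surj_f_inv_f)
  have "T (inv T x + inv T y) = x + y" by (simp add: tact_add[OF LM] fi)
  then show ?thesis using tact_inj fi by (metis injD)
qed

lemma inv_T_scal: "inv T (scal act a x) = scal act a (inv T x)"
proof -
  have fi: "T (inv T z) = z" for z using tact_bij by (simp add: bij_is_surj surj_f_inv_f)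
  have "T (scal act a (inv T x)) = scal act a x" by (simp add: tact_scal[OF LM] fi)
  then show ?thesis using tact_inj fi by (metis injD)
qed

lemma tpow_addR: "tpow act u (x + y) = tpow act u x + tpow act u y"
  unfolding tpow_def using funpow_add_hom[OF tact_add[OF LM]] funpow_add_hom[OF inv_T_add] by simp

lemma tpow_scal: "tpow act u (scal act a x) = scal act a (tpow act u x)"
  unfolding tpow_def using funpow_hom[of T "scal act a", OF tact_scal[OF LM]]
    funpow_hom[of "inv T" "scal act a", OF inv_T_scal] by simp

lemma tpow_zero: "tpow act u 0 = 0"
  using tpow_addR[of u 0 0] by simp

lemma tpow_sum: "tpow act u (sum f S) = (\<Sum>i\<in>S. tpow act u (f i))"
  by (induction S rule: infinite_finite_induct) (auto simp: tpow_addR tpow_zero)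

lemma tpow_minus: "tpow act u (- x) = - tpow act u x"
  using tpow_addR[of u x "-x"] tpow_zero[of u] by (simp add: eq_neg_iff_add_eq_0 add.commute)

abbreviation "Ez \<equiv> (\<lambda>k. tpow act k m0)"

lemma Ez_nat: "Ez (int n) = e n" by (simp add: tpow_nat en_def)

lemma rel_all: "RelE act c d Ez k"
proof -
  have "(\<Sum>j\<le>d. scal act (cc c d j) (Ez (k + int j))) = tpow act k (\<Sum>j\<le>d. scal act (cc c d j) (e j))"
    by (simp add: tpow_sum tpow_scal tpow_add Ez_nat)
  also have "\<dots> = 0" using rel_nat[of 0] by (simp add: tpow_zero)
  finally show ?thesis unfolding RelE_def .
qed

end

context setupF begin

abbreviation "Lam \<equiv> Lat val act \<sigma> s d Ez"
definition "chi k x = scal act (\<sigma> powi (r * k)) (tpow act (int d * k) x)"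

lemma powi_cancel2: "y * \<sigma> powi (- n) * \<sigma> powi n = y"
  using powi_add[OF val unif, of "-n" n] by (simp add: mult.assoc)

lemma aa_shift: "aa s (i + int d * k) = aa s i + r * k"
proof -
  have "of_int (i + int d * k) * s = of_int i * s + of_int (r * k)" using r by (simp add: algebra_simps)
  then show ?thesis unfolding aa_def by (simp only: ceiling_add_of_int)
qed

lemma chi_add: "chi k (x + y) = chi k x + chi k y"
  by (simp add: chi_def tpow_addR scal_addR[OF LM])

lemma chi_scal: "chi k (scal act a x) = scal act (\<sigma> powi (r * k) * a * \<sigma> powi (- (r * k))) (chi k x)"
  by (simp add: chi_def tpow_scal scal_scal[OF LM] powi_cancel2)

lemma chi_Y: "chi k (YY act \<sigma> s Ez i) = YY act \<sigma> s Ez (i + int d * k)"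
proof -
  have "chi k (YY act \<sigma> s Ez i) = scal act (\<sigma> powi (r * k) * \<sigma> powi aa s i) (tpow act (int d * k) (tpow act i m0))"
    by (simp add: chi_def YY_def tpow_scal scal_scal[OF LM])
  also have "\<dots> = scal act (\<sigma> powi (aa s i + r * k)) (Ez (i + int d * k))"
    by (simp add: powi_add[OF val unif, symmetric] tpow_add[symmetric] add.commute)
  also have "\<dots> = YY act \<sigma> s Ez (i + int d * k)" by (simp add: YY_def aa_shift)
  finally show ?thesis .
qed

lemma Y_in: "YY act \<sigma> s Ez k \<in> Lam" by (rule Y_all[OF rel_all])

lemma chi_Lat: "chi k ` Lam \<subseteq> Lam"
  unfolding Lat_def
proof (rule ospan_semilinear[OF val LM])
  show "finite (YY act \<sigma> s Ez ` {0..<int d})" by simp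
  show "\<And>x y. chi k (x + y) = chi k x + chi k y" by (rule chi_add)
  show "\<And>a x. chi k (scal act a x) = scal act (\<sigma> powi (r * k) * a * \<sigma> powi (- (r * k))) (chi k x)"
    by (rule chi_scal)
  show "\<And>a. a \<in> val_ring val \<Longrightarrow> \<sigma> powi (r * k) * a * \<sigma> powi (- (r * k)) \<in> val_ring val"
    by (rule vr_conj[OF val unif])
  show "\<And>g. g \<in> YY act \<sigma> s Ez ` {0..<int d} \<Longrightarrow> chi k g \<in> O_span val act (YY act \<sigma> s Ez ` {0..<int d})"
    using Y_in chi_Y unfolding Lat_def by auto
qed

lemma chi_inv: "chi k (chi (- k) x) = x"
proof -
  have "chi k (chi (- k) x) = scal act (\<sigma> powi (r * k) * \<sigma> powi (r * (- k))) (tpow act (int d * k + int d * (-k)) x)"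
    by (simp add: chi_def tpow_scal scal_scal[OF LM] tpow_add[symmetric])
  also have "\<dots> = x" by (simp add: powi_add[OF val unif, symmetric] scal_one[OF LM] tpow_def)
  finally show ?thesis .
qed

lemma part1_img: "(\<lambda>x. scal act (\<sigma> powi r) (tpow act (int d) x)) ` Lam = Lam"
proof -
  have eq: "(\<lambda>x. scal act (\<sigma> powi r) (tpow act (int d) x)) = chi 1" by (simp add: chi_def fun_eq_iff)
  show ?thesis unfolding eq
  proof
    show "chi 1 ` Lam \<subseteq> Lam" by (rule chi_Lat)
    show "Lam \<subseteq> chi 1 ` Lam"
    proof
      fix x assume "x \<in> Lam"
      then have "chi (-1) x \<in> Lam" using chi_Lat by blast
      moreover have "x = chi 1 (chi (-1) x)" using chi_inv[of 1 x] by simp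
      ultimately show "x \<in> chi 1 ` Lam" by blast
    qed
  qed
qed

lemma part1_tinv: assumes "s > 0" shows "tpow act (-1) ` Lam \<subseteq> Lam"
  unfolding Lat_def
proof (rule ospan_semilinear[OF val LM, where \<tau> = id])
  show "finite (YY act \<sigma> s Ez ` {0..<int d})" by simp
  show "\<And>x y. tpow act (-1) (x + y) = tpow act (-1) x + tpow act (-1) y" by (rule tpow_addR)
  show "\<And>a x. tpow act (-1) (scal act a x) = scal act (id a) (tpow act (-1) x)" by (simp add: tpow_scal)
  show "\<And>a. a \<in> val_ring val \<Longrightarrow> id a \<in> val_ring val" by simp
  fix g assume "g \<in> YY act \<sigma> s Ez ` {0..<int d}"
  then obtain i where g: "g = YY act \<sigma> s Ez i" by blast
  have mono: "aa s (i - 1) \<le> aa s i" unfolding aa_def using assms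
    by (intro ceiling_mono) (simp add: mult_right_mono)
  have "tpow act (-1) g = scal act (\<sigma> powi aa s i) (Ez (i - 1))"
    by (simp add: g YY_def tpow_scal tpow_add[symmetric])
  also have "\<dots> = scal act (\<sigma> powi (aa s i - aa s (i - 1))) (YY act \<sigma> s Ez (i - 1))"
    by (simp add: YY_def scal_scal[OF LM] powi_add[OF val unif, symmetric])
  also have "\<dots> \<in> Lam" using Y_in[of "i - 1"] ospan_scal[OF val LM] vr_powi[OF val unif] mono unfolding Lat_def by simp
  finally show "tpow act (-1) g \<in> O_span val act (YY act \<sigma> s Ez ` {0..<int d})" unfolding Lat_def .
qed

end

context setupF begin

abbreviation "Yn i \<equiv> YY act \<sigma> s Ez (int i)"

lemma Yn_e: "Yn i = scal act (\<sigma> powi aa s (int i)) (e i)"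
  by (simp add: YY_def Ez_nat)

lemma Yn_indep: assumes "(\<Sum>i<d. scal act (\<beta> i) (Yn i)) = 0" "i < d" shows "\<beta> i = 0"
proof -
  have "(\<Sum>i<d. scal act (\<beta> i * \<sigma> powi aa s (int i)) (e i)) = 0"
    using assms(1) by (simp add: Yn_e scal_scal[OF LM])
  from indep[OF this assms(2)] show ?thesis using unif(1) by simp
qed

lemma Yn_inj: "inj_on (\<lambda>i. Yn i) {..<d}"
proof (rule inj_onI, rule ccontr)
  fix i j assume ij: "i \<in> {..<d}" "j \<in> {..<d}" "Yn i = Yn j" "i \<noteq> j"
  define \<beta> where "\<beta> l = (if l = i then 1 else if l = j then -1 else (0::'a))" for l
  have "(\<Sum>l<d. scal act (\<beta> l) (Yn l)) = (\<Sum>l<d. (if l = i then Yn l else 0) + (if l = j then - Yn l else 0))"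
    by (rule sum.cong) (auto simp: \<beta>_def scal_one[OF LM] scal_minusL[OF LM] scal_0L[OF LM] ij(4))
  also have "\<dots> = Yn i - Yn j" using ij by (simp add: sum.distrib sum.delta)
  also have "\<dots> = 0" using ij by simp
  finally have "\<beta> i = 0" using Yn_indep ij by blast
  then show False by (simp add: \<beta>_def)
qed

lemma G_eq: "YY act \<sigma> s Ez ` {0..<int d} = (\<lambda>i. Yn i) ` {..<d}"
proof -
  have "{0..<int d} = int ` {..<d}" using image_atLeastZeroLessThan_int[of "int d"] by simp
  then show ?thesis by (simp add: image_image)
qed

lemma Lam_basis: "L_basis act ((\<lambda>i. Yn i) ` {..<d})"
  unfolding L_basis_def
proof (intro conjI allI impI)
  let ?G = "(\<lambda>i. Yn i) ` {..<d}"
  let ?inv = "the_inv_into {..<d} (\<lambda>i. Yn i)"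
  fix x
  obtain \<beta> where x: "x = (\<Sum>i<d. scal act (\<beta> i) (e i))" using coords by blast
  define \<alpha> where "\<alpha> g = \<beta> (?inv g) * \<sigma> powi (- aa s (int (?inv g)))" for g
  have "x = (\<Sum>i<d. scal act (\<alpha> (Yn i)) (Yn i))"
    unfolding x
  proof (rule sum.cong[OF refl])
    fix i assume "i \<in> {..<d}"
    then have "?inv (Yn i) = i" by (rule the_inv_into_f_f[OF Yn_inj])
    then show "scal act (\<beta> i) (e i) = scal act (\<alpha> (Yn i)) (Yn i)"
      by (simp add: \<alpha>_def Yn_e scal_scal[OF LM] mult.assoc powi_cancel)
  qed
  also have "\<dots> = (\<Sum>g\<in>?G. scal act (\<alpha> g) g)"
    by (rule sum.reindex[OF Yn_inj, unfolded comp_def, symmetric])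
  finally show "\<exists>S a. finite S \<and> S \<subseteq> ?G \<and> x = (\<Sum>b\<in>S. scal act (a b) b)" by blast
next
  let ?G = "(\<lambda>i. Yn i) ` {..<d}"
  fix S a assume S: "finite S" "S \<subseteq> ?G" and z: "(\<Sum>b\<in>S. scal act (a b) b) = 0"
  define a' where "a' g = (if g \<in> S then a g else 0)" for g
  have "(\<Sum>g\<in>?G. scal act (a' g) g) = (\<Sum>g\<in>S. scal act (a' g) g)"
    by (rule sum.mono_neutral_right) (use S in \<open>auto simp: a'_def scal_0L[OF LM]\<close>)
  also have "\<dots> = 0" using z by (simp add: a'_def)
  finally have "(\<Sum>i<d. scal act (a' (Yn i)) (Yn i)) = 0"
    by (simp add: sum.reindex[OF Yn_inj])
  then have "a' (Yn i) = 0" if "i < d" for i using Yn_indep[of "\<lambda>i. a' (Yn i)"] that by blast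
  then have a0: "a (Yn i) = 0" if "i < d" "Yn i \<in> S" for i using that unfolding a'_def by (metis (no_types, lifting))
  show "\<forall>b\<in>S. a b = 0"
  proof
    fix b assume "b \<in> S"
    then obtain i where "i < d" "b = Yn i" using S by blast
    then show "a b = 0" using a0 \<open>b \<in> S\<close> by blast
  qed
qed

lemma Lam_lattice: "O_lattice val act Lam"
  unfolding O_lattice_def
proof (intro conjI exI)
  show "finite (YY act \<sigma> s Ez ` {0..<int d})" by simp
  show "Lam = O_span val act (YY act \<sigma> s Ez ` {0..<int d})" by (simp add: Lat_def)
  show "(\<lambda>i. Yn i) ` {..<d} \<subseteq> Lam" using Y_in by blast
  show "L_basis act ((\<lambda>i. Yn i) ` {..<d})" by (rule Lam_basis)
qed

end

context setupF begin

lemma powi_cancel3: "\<sigma> powi a * \<sigma> powi (- a) = 1" "\<sigma> powi a * (\<sigma> powi (- a) * y) = y"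
  using powi_add[OF val unif, of a "-a"] by (simp_all add: mult.assoc[symmetric])

definition "LN N = {x. scal act (\<sigma> powi (- N)) x \<in> Lam}"

lemma Lam_scal: "x \<in> Lam \<Longrightarrow> ob \<in> val_ring val \<Longrightarrow> scal act ob x \<in> Lam"
  unfolding Lat_def by (rule ospan_scal[OF val LM])
lemma Lam_add: "x \<in> Lam \<Longrightarrow> y \<in> Lam \<Longrightarrow> x + y \<in> Lam"
  unfolding Lat_def by (rule ospan_add[OF val LM])
lemma Lam_0: "0 \<in> Lam"
  unfolding Lat_def by (rule ospan_0[OF val LM])

lemma LN_mono: "N' \<le> N \<Longrightarrow> x \<in> LN N \<Longrightarrow> x \<in> LN N'"
  unfolding LN_def
proof (elim CollectE, intro CollectI)
  assume a: "N' \<le> N" "scal act (\<sigma> powi (- N)) x \<in> Lam"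
  have "\<sigma> powi (N - N') \<in> val_ring val" using a(1) by (intro vr_powi[OF val unif]) simp
  then have "scal act (\<sigma> powi (N - N')) (scal act (\<sigma> powi (- N)) x) \<in> Lam"
    using Lam_scal a(2) by blast
  then show "scal act (\<sigma> powi (- N')) x \<in> Lam"
    by (simp add: scal_scal[OF LM] powi_add[OF val unif, symmetric])
qed

lemma LN_add: "x \<in> LN N \<Longrightarrow> y \<in> LN N \<Longrightarrow> x + y \<in> LN N"
  unfolding LN_def by (simp add: scal_addR[OF LM] Lam_add)

lemma LN_0: "0 \<in> LN N" unfolding LN_def by (simp add: Lam_0 scal_0R[OF LM])

lemma LN_scal: "x \<in> LN N \<Longrightarrow> ob \<in> val_ring val \<Longrightarrow> scal act ob x \<in> LN N"
  unfolding LN_def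
proof (elim CollectE, intro CollectI)
  assume x: "scal act (\<sigma> powi (- N)) x \<in> Lam" and ob: "ob \<in> val_ring val"
  have "scal act (\<sigma> powi (- N) * ob * \<sigma> powi (- (- N))) (scal act (\<sigma> powi (- N)) x) \<in> Lam"
    by (intro Lam_scal x vr_conj[OF val unif] ob)
  then show "scal act (\<sigma> powi (- N)) (scal act ob x) \<in> Lam"
    by (simp add: scal_scal[OF LM] mult.assoc powi_cancel3)
qed

lemma LN_sum: "(\<And>i. i \<in> S \<Longrightarrow> f i \<in> LN N) \<Longrightarrow> sum f S \<in> LN N"
  by (induction S rule: infinite_finite_induct) (auto simp: LN_0 LN_add)

lemma LN_bound: "\<exists>K. x \<in> LN (- K)"
proof -
  obtain \<beta> where x: "x = (\<Sum>i<d. scal act (\<beta> i) (e i))" using coords by blast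
  define K where "K = (\<Sum>i<d. \<bar>aa s (int i)\<bar> + \<bar>val (\<beta> i)\<bar>)"
  have Kge: "\<bar>aa s (int i)\<bar> + \<bar>val (\<beta> i)\<bar> \<le> K" if "i < d" for i
    unfolding K_def using that by (intro member_le_sum) auto
  have "scal act (\<sigma> powi K) x = (\<Sum>i<d. scal act (\<sigma> powi K * \<beta> i * \<sigma> powi (- aa s (int i))) (Yn i))"
    unfolding x by (simp add: scal_sumR[OF LM] scal_scal[OF LM] Yn_e mult.assoc powi_cancel)
  also have "\<dots> \<in> Lam"
  proof (rule ospan_combo[OF val LM, of _ _ _ "YY act \<sigma> s Ez ` {0..<int d}", folded Lat_def])
    fix i assume i: "i \<in> {..<d}"
    show "\<sigma> powi K * \<beta> i * \<sigma> powi (- aa s (int i)) \<in> val_ring val"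
      using Kge[of i] i by (intro vr_scale[OF val unif]) auto
    show "Yn i \<in> Lam" by (rule Y_in)
  qed simp
  finally show ?thesis unfolding LN_def by auto
qed

lemma ospan_LN: assumes "finite G'" shows "\<exists>K. O_span val act G' \<subseteq> LN (- K)"
proof -
  obtain Kf where Kf: "\<And>g. g \<in> LN (- Kf g)" using LN_bound by metis
  define K where "K = (\<Sum>g\<in>G'. \<bar>Kf g\<bar>)"
  have "g \<in> LN (- K)" if "g \<in> G'" for g
  proof (rule LN_mono[OF _ Kf[of g]])
    have "\<bar>Kf g\<bar> \<le> K" unfolding K_def using assms that by (intro member_le_sum) auto
    then show "- K \<le> - Kf g" by linarith
  qed
  then have "O_span val act G' \<subseteq> LN (- K)"
    unfolding O_span_def by (auto intro!: LN_sum LN_scal)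
  then show ?thesis by blast
qed

lemma LN_sep: assumes "x \<noteq> 0" shows "\<exists>N. x \<notin> LN N"
proof -
  obtain \<beta> where x: "x = (\<Sum>i<d. scal act (\<beta> i) (e i))" using coords by blast
  obtain j where j: "j < d" "\<beta> j \<noteq> 0"
    using assms unfolding x by (metis (no_types, lifting) scal_0L[OF LM] sum.neutral lessThan_iff)
  define N where "N = val (\<beta> j) - aa s (int j) + 1"
  have "x \<notin> LN N"
  proof
    assume "x \<in> LN N"
    then have "scal act (\<sigma> powi (- N)) x \<in> Lat val act \<sigma> s d Ez" unfolding LN_def by simp
    from Lat_coords[OF this] obtain b where b: "\<forall>i<d. b i \<in> val_ring val"
      and bx: "scal act (\<sigma> powi (- N)) x = (\<Sum>i<d. scal act (b i * \<sigma> powi aa s (int i)) (Ez (int i)))" by blast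
    have "x = scal act (\<sigma> powi N) (scal act (\<sigma> powi (- N)) x)"
      by (simp add: scal_scal[OF LM] powi_add[OF val unif, symmetric] scal_one[OF LM])
    also have "\<dots> = (\<Sum>i<d. scal act (\<sigma> powi N * (b i * \<sigma> powi aa s (int i))) (e i))"
      unfolding bx by (simp add: scal_sumR[OF LM] scal_scal[OF LM] Ez_nat)
    finally have "\<beta> j = \<sigma> powi N * (b j * \<sigma> powi aa s (int j))"
      using indep_eq[OF _ j(1)] x by metis
    then have bj: "b j \<noteq> 0" "\<beta> j = \<sigma> powi N * b j * \<sigma> powi aa s (int j)" using j(2) by (auto simp: mult.assoc)
    then have "val (\<beta> j) = N + val (b j) + aa s (int j)"
      using val_mult[OF val] powi_nz[OF val unif] val_powi[OF val unif] by simp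
    moreover have "val (b j) \<ge> 0" using b j(1) bj(1) by (auto simp: val_ring_def)
    ultimately show False unfolding N_def by linarith
  qed
  then show ?thesis by blast
qed

lemma chi_LN: "x \<in> LN N \<Longrightarrow> chi k x \<in> LN N"
  unfolding LN_def
proof (elim CollectE, intro CollectI)
  assume "scal act (\<sigma> powi (- N)) x \<in> Lam"
  then have "chi k (scal act (\<sigma> powi (- N)) x) \<in> Lam" using chi_Lat by blast
  moreover have "chi k (scal act (\<sigma> powi (- N)) x) = scal act (\<sigma> powi (- N)) (chi k x)"
    by (simp add: chi_scal powi_add[OF val unif, symmetric] add.commute)
  ultimately show "scal act (\<sigma> powi (- N)) (chi k x) \<in> Lam" by simp
qed

lemma shift_LN: "scal act (\<sigma> powi ee) x \<in> LN (N + ee) \<longleftrightarrow> x \<in> LN N"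
  unfolding LN_def by (simp add: scal_scal[OF LM] powi_add[OF val unif, symmetric])

definition "Fm w u x = scal act (\<sigma> powi w) (tpow act u x)"

lemma Fm_pow: "(Fm w u ^^ n) x = scal act (\<sigma> powi (w * int n)) (tpow act (u * int n) x)"
proof (induction n)
  case 0 then show ?case by (simp add: scal_one[OF LM] tpow_def)
next
  case (Suc n)
  have "(Fm w u ^^ Suc n) x = scal act (\<sigma> powi w * \<sigma> powi (w * int n)) (tpow act (u + u * int n) x)"
    by (simp add: Suc Fm_def tpow_scal scal_scal[OF LM] tpow_add)
  then show ?case by (simp add: powi_add[OF val unif, symmetric] algebra_simps)
qed

lemma Fm_d: "(Fm w u ^^ d) x = scal act (\<sigma> powi (w * int d - r * u)) (chi u x)"
  unfolding Fm_pow chi_def by (simp add: scal_scal[OF LM] powi_add[OF val unif, symmetric] mult.commute)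

lemma Fm_d_notin: assumes "x \<notin> LN N" shows "(Fm w u ^^ d) x \<notin> LN (N + (w * int d - r * u))"
proof
  assume "(Fm w u ^^ d) x \<in> LN (N + (w * int d - r * u))"
  then have "chi u x \<in> LN N" unfolding Fm_d shift_LN .
  then have "chi (- u) (chi (- (- u)) x) \<in> LN N" using chi_LN by simp
  then show False using assms chi_inv[of "- u" x] by simp
qed

lemma Fm_iter_notin: assumes "x \<notin> LN N" shows "(Fm w u ^^ (d * n)) x \<notin> LN (N + int n * (w * int d - r * u))"
proof (induction n)
  case 0 then show ?case using assms by simp
next
  case (Suc n)
  have "(Fm w u ^^ (d * Suc n)) x = (Fm w u ^^ d) ((Fm w u ^^ (d * n)) x)"
  proof -
    have "d * Suc n = d + d * n" by simp
    then show ?thesis by (simp only: funpow_add comp_def)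
  qed
  moreover have "N + int (Suc n) * (w * int d - r * u) = (N + int n * (w * int d - r * u)) + (w * int d - r * u)"
    by (simp add: algebra_simps)
  ultimately show ?case using Fm_d_notin[OF Suc, of w u] by (simp add: add.assoc)
qed

lemma contra:
  assumes fin: "finite G'" and inv: "\<And>x. x \<in> O_span val act G' \<Longrightarrow> Fm w u x \<in> O_span val act G'"
    and x0: "x0 \<in> O_span val act G'" "x0 \<noteq> 0" and neg: "w * int d - r * u < 0"
  shows False
proof -
  obtain K where K: "O_span val act G' \<subseteq> LN (- K)" using ospan_LN[OF fin] by blast
  obtain N0 where N0: "x0 \<notin> LN N0" using LN_sep[OF x0(2)] by blast
  define n where "n = nat (N0 + K)"
  have it: "(Fm w u ^^ m) x0 \<in> O_span val act G'" for m by (induction m) (auto simp: x0 inv)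
  have A: "(Fm w u ^^ (d * n)) x0 \<in> LN (- K)" using it K by blast
  have B: "N0 + int n * (w * int d - r * u) \<le> - K"
  proof -
    have "int n * (w * int d - r * u) \<le> int n * (-1)" using neg by (intro mult_left_mono) auto
    then show ?thesis unfolding n_def by linarith
  qed
  have "(Fm w u ^^ (d * n)) x0 \<in> LN (N0 + int n * (w * int d - r * u))" by (rule LN_mono[OF B A])
  then show False using Fm_iter_notin[OF N0] by blast
qed

lemma Fm_inv: "Fm (- w) (- u) (Fm w u y) = y"
proof -
  have "Fm (- w) (- u) (Fm w u y) = scal act (\<sigma> powi (- w) * \<sigma> powi w) (tpow act (- u) (tpow act u y))"
    by (simp add: Fm_def tpow_scal scal_scal[OF LM])
  also have "\<dots> = tpow act (- u + u) y" by (simp only: powi_cancel scal_one[OF LM] tpow_add)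
  finally show ?thesis by (simp add: tpow_def)
qed

lemma part2:
  assumes lat: "O_lattice val act L'" and img: "(\<lambda>x. scal act (\<sigma> powi w) (tpow act u x)) ` L' = L'"
    and u: "u \<noteq> 0"
  shows "real_of_int w / real_of_int u = s"
proof -
  have lat': "(\<exists>G. finite G \<and> L' = O_span val act G) \<and> (\<exists>B\<subseteq>L'. L_basis act B)"
    using lat by (simp only: O_lattice_def)
  obtain G' where G': "finite G'" "L' = O_span val act G'" using lat' by blast
  obtain B where B: "B \<subseteq> L'" "L_basis act B" using lat' by blast
  have Feq: "Fm w u = (\<lambda>x. scal act (\<sigma> powi w) (tpow act u x))" by (rule ext) (simp only: Fm_def)
  have img': "Fm w u ` L' = L'" unfolding Feq by (rule img)
  have "\<exists>x0\<in>L'. x0 \<noteq> 0"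
  proof (rule ccontr)
    assume "\<not> ?thesis"
    then have B0: "\<And>b. b \<in> B \<Longrightarrow> b = 0" using B(1) by blast
    have "\<forall>x. \<exists>S a. finite S \<and> S \<subseteq> B \<and> x = (\<Sum>b\<in>S. scal act (a b) b)"
      using B(2) unfolding L_basis_def by (rule conjunct1)
    then obtain S a where S: "S \<subseteq> B" "m0 = (\<Sum>b\<in>S. scal act (a b) b)" by blast
    have "(\<Sum>b\<in>S. scal act (a b) b) = 0"
    proof (rule sum.neutral, rule ballI)
      fix b assume "b \<in> S"
      then have "b = 0" using B0 S(1) by blast
      then show "scal act (a b) b = 0" by (simp add: scal_0R[OF LM])
    qed
    then have "m0 = 0" using S(2) by simp
    then show False using m0_nz by simp
  qed
  then obtain x0 where x0: "x0 \<in> L'" "x0 \<noteq> 0" by blast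
  have fw: "Fm w u x \<in> L'" if "x \<in> L'" for x
  proof -
    have "Fm w u x \<in> Fm w u ` L'" using that by (rule imageI)
    then show ?thesis unfolding img' .
  qed
  have bw: "Fm (- w) (- u) x \<in> L'" if "x \<in> L'" for x
  proof -
    have "x \<in> Fm w u ` L'" unfolding img' by (rule that)
    then obtain y where "y \<in> L'" "x = Fm w u y" by (rule imageE) blast
    then show ?thesis using Fm_inv by simp
  qed
  have c1: "\<not> (w * int d - r * u < 0)"
  proof
    assume neg: "w * int d - r * u < 0"
    show False
    proof (rule contra[OF G'(1) _ _ _ neg])
      show "\<And>x. x \<in> O_span val act G' \<Longrightarrow> Fm w u x \<in> O_span val act G'" using fw G'(2) by simp
      show "x0 \<in> O_span val act G'" using x0 G'(2) by simp
      show "x0 \<noteq> 0" by (rule x0(2))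
    qed
  qed
  have c2: "\<not> ((- w) * int d - r * (- u) < 0)"
  proof
    assume neg: "(- w) * int d - r * (- u) < 0"
    show False
    proof (rule contra[OF G'(1) _ _ _ neg])
      show "\<And>x. x \<in> O_span val act G' \<Longrightarrow> Fm (- w) (- u) x \<in> O_span val act G'" using bw G'(2) by simp
      show "x0 \<in> O_span val act G'" using x0 G'(2) by simp
      show "x0 \<noteq> 0" by (rule x0(2))
    qed
  qed
  have wd: "w * int d = r * u" using c1 c2 by simp
  have "real_of_int (w * int d) = real_of_int (r * u)" by (simp only: wd)
  then have "real_of_int w * real d = real d * s * real_of_int u" using r by simp
  then have "real_of_int w = s * real_of_int u" using d by (simp add: algebra_simps)
  then show ?thesis using u by simp
qed

end

definition NPset :: "nat set \<Rightarrow> (nat \<Rightarrow> real) \<Rightarrow> real \<Rightarrow> real set" where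
  "NPset K V x = {(\<Sum>i\<in>K. l i * V i) | l. (\<forall>i. 0 \<le> l i) \<and> (\<Sum>i\<in>K. l i) = 1 \<and> (\<Sum>i\<in>K. l i * real i) = x}"

lemma only_j:
  assumes "finite K" "j \<in> K" "(\<Sum>i\<in>K. l i) = (1::real)" "\<And>i. i \<in> K \<Longrightarrow> i \<noteq> j \<Longrightarrow> l i = 0"
  shows "(\<Sum>i\<in>K. l i * V i) = V j"
proof -
  have "(\<Sum>i\<in>K. l i) = (\<Sum>i\<in>K. if i = j then l j else 0)" using assms(4) by (intro sum.cong) auto
  then have lj: "l j = 1" using assms(1-3) by (simp add: sum.delta')
  have "(\<Sum>i\<in>K. l i * V i) = (\<Sum>i\<in>K. if i = j then l j * V j else 0)" using assms(4) by (intro sum.cong) auto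
  then show ?thesis using assms(1,2) lj by (simp add: sum.delta')
qed

lemma indicator_adm:
  assumes "finite K" "j \<in> K"
  shows "V j \<in> NPset K V (real j)"
proof -
  let ?l = "\<lambda>i. if i = j then 1 else (0::real)"
  have "(\<Sum>i\<in>K. ?l i * V i) = V j" using assms by (intro only_j) (auto simp: sum.delta')
  moreover have "(\<Sum>i\<in>K. ?l i) = 1" "(\<Sum>i\<in>K. ?l i * real i) = real j" using assms
    by (simp_all add: sum.delta' if_distrib[of "\<lambda>a. a * _"] cong: if_cong)
  ultimately show ?thesis unfolding NPset_def by (intro CollectI exI[of _ ?l]) auto
qed

lemma NP_min:
  assumes "finite K" "j \<in> K" "\<And>i. i \<in> K \<Longrightarrow> j \<le> i"
  shows "NPset K V (real j) = {V j}"
proof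
  show "{V j} \<subseteq> NPset K V (real j)" using indicator_adm[OF assms(1,2)] by simp
  show "NPset K V (real j) \<subseteq> {V j}"
  proof
    fix y assume "y \<in> NPset K V (real j)"
    then obtain l where l: "\<forall>i. 0 \<le> l i" "(\<Sum>i\<in>K. l i) = 1" "(\<Sum>i\<in>K. l i * real i) = real j"
      and y: "y = (\<Sum>i\<in>K. l i * V i)" unfolding NPset_def by blast
    have e2: "(\<Sum>i\<in>K. l i * real j) = real j * (\<Sum>i\<in>K. l i)"
      by (subst sum_distrib_left) (simp add: mult.commute)
    have "(\<Sum>i\<in>K. l i * (real i - real j)) = (\<Sum>i\<in>K. l i * real i) - real j * (\<Sum>i\<in>K. l i)"
      unfolding e2[symmetric] by (simp add: right_diff_distrib sum_subtractf)
    also have "\<dots> = 0" using l by simp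
    finally have z: "(\<Sum>i\<in>K. l i * (real i - real j)) = 0" .
    have nn: "\<forall>i\<in>K. 0 \<le> l i * (real i - real j)" using l(1) assms(3) by (simp add: mult_nonneg_nonneg)
    have "l i = 0" if "i \<in> K" "i \<noteq> j" for i
    proof -
      have "\<forall>i\<in>K. l i * (real i - real j) = 0"
        using sum_nonneg_eq_0_iff[OF assms(1), of "\<lambda>i. l i * (real i - real j)"] nn z by blast
      then have "l i * (real i - real j) = 0" using that(1) by blast
      moreover have "real i - real j \<noteq> 0" using that by simp
      ultimately show ?thesis by simp
    qed
    then have "y = V j" unfolding y using assms(1,2) l(2) by (intro only_j) auto
    then show "y \<in> {V j}" by simp
  qed
qed

lemma NP_max:
  assumes "finite K" "j \<in> K" "\<And>i. i \<in> K \<Longrightarrow> i \<le> j"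
  shows "NPset K V (real j) = {V j}"
proof
  show "{V j} \<subseteq> NPset K V (real j)" using indicator_adm[OF assms(1,2)] by simp
  show "NPset K V (real j) \<subseteq> {V j}"
  proof
    fix y assume "y \<in> NPset K V (real j)"
    then obtain l where l: "\<forall>i. 0 \<le> l i" "(\<Sum>i\<in>K. l i) = 1" "(\<Sum>i\<in>K. l i * real i) = real j"
      and y: "y = (\<Sum>i\<in>K. l i * V i)" unfolding NPset_def by blast
    have e2: "(\<Sum>i\<in>K. l i * real j) = real j * (\<Sum>i\<in>K. l i)"
      by (subst sum_distrib_left) (simp add: mult.commute)
    have "(\<Sum>i\<in>K. l i * (real j - real i)) = real j * (\<Sum>i\<in>K. l i) - (\<Sum>i\<in>K. l i * real i)"
      unfolding e2[symmetric] by (simp add: right_diff_distrib sum_subtractf)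
    also have "\<dots> = 0" using l by simp
    finally have z: "(\<Sum>i\<in>K. l i * (real j - real i)) = 0" .
    have nn: "\<forall>i\<in>K. 0 \<le> l i * (real j - real i)" using l(1) assms(3) by (simp add: mult_nonneg_nonneg)
    have "l i = 0" if "i \<in> K" "i \<noteq> j" for i
    proof -
      have "\<forall>i\<in>K. l i * (real j - real i) = 0"
        using sum_nonneg_eq_0_iff[OF assms(1), of "\<lambda>i. l i * (real j - real i)"] nn z by blast
      then have "l i * (real j - real i) = 0" using that(1) by blast
      moreover have "real j - real i \<noteq> 0" using that by simp
      ultimately show ?thesis by simp
    qed
    then have "y = V j" unfolding y using assms(1,2) l(2) by (intro only_j) auto
    then show "y \<in> {V j}" by simp
  qed
qed

lemma NP_le:
  assumes "finite K" "j \<in> K"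
  shows "Inf (NPset K V (real j)) \<le> V j"
proof (rule cInf_lower[OF indicator_adm[OF assms]])
  define m where "m = Min (V ` K)"
  have "m \<le> y" if "y \<in> NPset K V (real j)" for y
  proof -
    have "\<exists>l. y = (\<Sum>i\<in>K. l i * V i) \<and> (\<forall>i. 0 \<le> l i) \<and> (\<Sum>i\<in>K. l i) = 1 \<and> (\<Sum>i\<in>K. l i * real i) = real j"
      using that unfolding NPset_def by simp
    then obtain l where y: "y = (\<Sum>i\<in>K. l i * V i)" and l: "\<forall>i. 0 \<le> l i" "(\<Sum>i\<in>K. l i) = 1"
      by blast
    have "(\<Sum>i\<in>K. l i * m) \<le> (\<Sum>i\<in>K. l i * V i)"
    proof (rule sum_mono)
      fix i assume "i \<in> K"
      then have "m \<le> V i" unfolding m_def using assms(1) by simp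
      then show "l i * m \<le> l i * V i" using l(1) by (simp add: mult_left_mono)
    qed
    moreover have "(\<Sum>i\<in>K. l i * m) = (\<Sum>i\<in>K. l i) * m" by (rule sum_distrib_right[symmetric])
    ultimately show ?thesis using l(2) y by (metis mult_1)
  qed
  then show "bdd_below (NPset K V (real j))" by (rule bdd_belowI)
qed

lemma lookup_monic: "Poly_Mapping.lookup (monic_poly c d) i = (if i \<le> d then cc c d i else 0)"
  unfolding monic_sum by (simp add: lookup_sum lookup_single when_def sum.delta)

lemma NP_facts:
  fixes val :: "'a::division_ring \<Rightarrow> int"
  assumes val: "discrete_valuation val" and d: "d \<ge> 1" and c0: "c 0 \<noteq> 0"
    and NP: "newton_single_edge val (monic_poly c d) s" and r: "real_of_int r = real d * s"
  shows "val (c 0) = - r" "\<And>j. j < d \<Longrightarrow> c j \<noteq> 0 \<Longrightarrow> real_of_int (val (c j)) \<ge> real j * s - r"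
proof -
  let ?f = "monic_poly c d"
  let ?K = "Poly_Mapping.keys ?f"
  let ?V = "\<lambda>i. real_of_int (val (Poly_Mapping.lookup ?f i))"
  have inK: "i \<in> ?K \<longleftrightarrow> i \<le> d \<and> cc c d i \<noteq> 0" for i by (simp add: in_keys_iff lookup_monic)
  have fK: "finite ?K" by simp
  have 0: "0 \<in> ?K" using inK c0 d by (simp add: cc_def)
  have dK: "d \<in> ?K" using inK by (simp add: cc_def)
  have mn: "Min ?K = 0" using 0 fK by (intro Min_eqI) auto
  have mx: "Max ?K = d" using dK fK inK by (intro Max_eqI) auto
  have npdef: "newton_polygon val ?f x = Inf (NPset ?K ?V x)" for x
    unfolding newton_polygon_def NPset_def ..
  obtain b where b: "\<And>x. x \<in> {real 0..real d} \<Longrightarrow> newton_polygon val ?f x = b + s * x"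
    using NP unfolding newton_single_edge_def mn mx by blast
  have "newton_polygon val ?f (real 0) = ?V 0"
    unfolding npdef by (subst NP_min[OF fK 0]) auto
  then have b0: "b = ?V 0" using b[of 0] by simp
  have "newton_polygon val ?f (real d) = ?V d"
    unfolding npdef by (subst NP_max[OF fK dK]) (auto simp: inK)
  then have bd: "b + s * real d = ?V d" using b[of "real d"] by simp
  have "?V d = 0" by (simp add: lookup_monic cc_def val_one[OF val])
  moreover have "?V 0 = real_of_int (val (c 0))" using d by (simp add: lookup_monic cc_def)
  ultimately have v0: "real_of_int (val (c 0)) = - real d * s" using b0 bd by (simp add: algebra_simps)
  then show "val (c 0) = - r" using r by (metis of_int_eq_iff of_int_minus mult_minus_left)
  fix j assume j: "j < d" "c j \<noteq> 0"
  then have jK: "j \<in> ?K" using inK by (simp add: cc_def)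
  have "newton_polygon val ?f (real j) \<le> ?V j" unfolding npdef by (rule NP_le[OF fK jK])
  then have "b + s * real j \<le> ?V j" using b[of "real j"] j by simp
  moreover have "?V j = real_of_int (val (c j))" using j by (simp add: lookup_monic cc_def)
  ultimately show "real_of_int (val (c j)) \<ge> real j * s - r" using b0 v0 \<open>?V 0 = _\<close> r
    by (simp add: algebra_simps)
qed


theorem theorem3p7:
  fixes val :: "'a::division_ring \<Rightarrow> int" and \<sigma> :: 'a
    and c :: "nat \<Rightarrow> 'a" and d :: nat and s :: real and r :: int
    and act :: "(nat \<Rightarrow>\<^sub>0 'a) \<Rightarrow> 'm::ab_group_add \<Rightarrow> 'm"
  assumes val: "discrete_valuation val" and compl: "val_complete val"
    and unif: "\<sigma> \<noteq> 0" "val \<sigma> = 1"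
    and d: "d \<ge> 1" and c0: "c 0 \<noteq> 0"
    and NP: "newton_single_edge val (monic_poly c d) s"
    and r: "real_of_int r = real d * s"
    and M: "left_module act" "iso_cyclic_quotient act (monic_poly c d)"
  shows "(\<exists>\<Lambda>. O_lattice val act \<Lambda> \<and>
            (\<lambda>x. scal act (\<sigma> powi r) (tpow act (int d) x)) ` \<Lambda> = \<Lambda> \<and>
            (s > 0 \<longrightarrow> tpow act (-1) ` \<Lambda> \<subseteq> \<Lambda>))
       \<and> (\<forall>u w \<Lambda>'. u \<noteq> 0 \<longrightarrow> O_lattice val act \<Lambda>' \<longrightarrow>
            (\<lambda>x. scal act (\<sigma> powi w) (tpow act u x)) ` \<Lambda>' = \<Lambda>' \<longrightarrow>
            real_of_int w / real_of_int u = s)"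
proof -
  note NPf = NP_facts[OF val d c0 NP r]
  obtain m0 where m0: "\<forall>x. \<exists>g. x = act g m0" "\<forall>g. act g m0 = 0 \<longleftrightarrow> (\<exists>h. g = h * monic_poly c d)"
    using M(2) unfolding iso_cyclic_quotient_def by blast
  interpret F: setupF val act \<sigma> c d s r m0
  proof (unfold_locales)
    show "discrete_valuation val" by (rule val)
    show "left_module act" by (rule M(1))
    show "\<sigma> \<noteq> 0" "val \<sigma> = 1" by (rule unif(1), rule unif(2))
    show "1 \<le> d" by (rule d)
    show "c 0 \<noteq> 0" by (rule c0)
    show "real_of_int r = real d * s" by (rule r)
    show "val (c 0) = - r" by (rule NPf(1))
    show "\<And>j. j < d \<Longrightarrow> c j \<noteq> 0 \<Longrightarrow> real j * s - real_of_int r \<le> real_of_int (val (c j))" by (rule NPf(2))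
    show "\<And>g. (act g m0 = 0) = (\<exists>h. g = h * monic_poly c d)" using m0(2) by blast
    show "\<And>x. \<exists>g. x = act g m0" using m0(1) by blast
  qed
  show ?thesis
  proof (intro conjI allI impI)
    show "\<exists>\<Lambda>. O_lattice val act \<Lambda> \<and>
            (\<lambda>x. scal act (\<sigma> powi r) (tpow act (int d) x)) ` \<Lambda> = \<Lambda> \<and>
            (s > 0 \<longrightarrow> tpow act (-1) ` \<Lambda> \<subseteq> \<Lambda>)"
      using F.Lam_lattice F.part1_img F.part1_tinv by blast
    fix u w \<Lambda>' assume "u \<noteq> 0" "O_lattice val act \<Lambda>'" "(\<lambda>x. scal act (\<sigma> powi w) (tpow act u x)) ` \<Lambda>' = \<Lambda>'"
    then show "real_of_int w / real_of_int u = s" using F.part2 by blast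
  qed
qed


end
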